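(* Let $d\ge1$ and let $\eta$ be the stationary Brown-Resnick space-time process (defined in the context) with dependence function $\delta(\boldsymbol h,u)=\sum_{j=1}^dC_j|h_j|^{\alpha_j}+C_{d+1}|u|^{\alpha_{d+1}}$, parameter $\boldsymbol\theta=(C_1,\dots,C_{d+1},\alpha_1,\dots,\alpha_{d+1})$, true parameter $\boldsymbol\theta^\star$ lying in a compact set $\Theta^\star\subset\{C_j\in(0,\infty),\alpha_j\in(0,2],j=1,\dots,d+1\}$, and assume the identifiability condition stated in the context. Then for $\boldsymbol s^{(1)},\boldsymbol s^{(2)}\in\mathbb R^d$ and $t^{(1)},t^{(2)}\in[0,\infty)$, componentwise: (1) $\mathbb E[|\nabla_{\boldsymbol\theta}\log g_{\boldsymbol\theta}(\eta(\boldsymbol s^{(1)},t^{(1)}),\eta(\boldsymbol s^{(2)},t^{(2)}))|^3]<\infty$ for every $\boldsymbol\theta\in\Theta^\star$; (2) $\mathbb E[\sup_{\boldsymbol\theta\in\Theta^\star}|\nabla^2_{\boldsymbol\theta}\log g_{\boldsymbol\theta}(\eta(\boldsymbol s^{(1)},t^{(1)}),\eta(\boldsymbol s^{(2)},t^{(2)}))|]<\infty$.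
   Context: Brown-Resnick space-time process: $\eta(\boldsymbol s,t)=\bigvee_{j\ge1}\xi_je^{W_j(\boldsymbol s,t)-\delta(\boldsymbol s,t)}$, $\{\xi_j\}$ points of a Poisson process on $[0,\infty)$ with intensity $\xi^{-2}d\xi$, $W_j$ independent copies of a centred Gaussian process $W$ with stationary increments, $W(\boldsymbol 0,0)=0$, covariance $\delta(\boldsymbol s^{(1)},t^{(1)})+\delta(\boldsymbol s^{(2)},t^{(2)})-\delta(\boldsymbol s^{(1)}-\boldsymbol s^{(2)},t^{(1)}-t^{(2)})$; data generated under $\boldsymbol\theta^\star$; expectations are under $\boldsymbol\theta^\star$. For lag $(\boldsymbol h,u)\ne\boldsymbol 0$ the bivariate distribution of $(\eta(\boldsymbol s,t),\eta(\boldsymbol s+\boldsymbol h,t+u))$ is $G=\exp\{-V\}$, $V(y_1,y_2)=\frac1{y_1}\Phi\big(\frac{\log(y_2/y_1)}{\sqrt{2\delta(\boldsymbol h,u)}}+\sqrt{\delta(\boldsymbol h,u)/2}\big)+\frac1{y_2}\Phi\big(\frac{\log(y_1/y_2)}{\sqrt{2\delta(\boldsymbol h,u)}}+\sqrt{\delta(\boldsymbol h,u)/2}\big)$, $\Phi$ the standard normal cdf; $g_{\boldsymbol\theta}$ is the density of this distribution under $\boldsymbol\theta$, with the lag $(\boldsymbol h,u)$ given by the difference of the two space-time points at which $\eta$ is evaluated. Identifiability condition (for fixed maximal lags $\boldsymbol r\in\mathbb N_0^d$, $p\in\mathbb N_0$, $(\boldsymbol r,p)\neq\boldsymbol 0$,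 design mask $\mathcal H_{\boldsymbol r}=\{\boldsymbol h\in\mathbb N_0^d:\boldsymbol h\le\boldsymbol r\}$, and grid points $(\boldsymbol s,t)\in\{1,\dots,M\}^d\times\{1,\dots,T\}$): $\boldsymbol\theta=\tilde{\boldsymbol\theta}$ iff $g_{\boldsymbol\theta}(\eta(\boldsymbol s,t),\eta(\boldsymbol s+\boldsymbol h,t+u))=g_{\tilde{\boldsymbol\theta}}(\eta(\boldsymbol s,t),\eta(\boldsymbol s+\boldsymbol h,t+u))$ for all $\boldsymbol h\in\mathcal H_{\boldsymbol r}$, $0\le u\le p$. *)

theory Defs
  imports "HOL-Probability.Probability"
begin

text \<open>Parameter index: (False, Some j) = C_j, (False, None) = C_{d+1} (time),
  (True, Some j) = alpha_j, (True, None) = alpha_{d+1}.\<close>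
type_synonym 'd par = "real ^ (bool \<times> 'd option)"

definition Phi :: "real \<Rightarrow> real" where
  "Phi x = (LBINT t:{..x}. std_normal_density t)"

definition delta :: "'d::finite par \<Rightarrow> real ^ 'd \<Rightarrow> real \<Rightarrow> real" where
  "delta \<theta> h u =
     (\<Sum>j\<in>UNIV. \<theta> $ (False, Some j) * \<bar>h $ j\<bar> powr (\<theta> $ (True, Some j)))
     + \<theta> $ (False, None) * \<bar>u\<bar> powr (\<theta> $ (True, None))"

definition Vexp :: "'d::finite par \<Rightarrow> real ^ 'd \<Rightarrow> real \<Rightarrow> real \<Rightarrow> real \<Rightarrow> real" where
  "Vexp \<theta> h u y1 y2 =
     (let D = delta \<theta> h u in
       1 / y1 * Phi (ln (y2 / y1) / sqrt (2 * D) + sqrt (D / 2))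
     + 1 / y2 * Phi (ln (y1 / y2) / sqrt (2 * D) + sqrt (D / 2)))"

definition Gcdf :: "'d::finite par \<Rightarrow> real ^ 'd \<Rightarrow> real \<Rightarrow> real \<Rightarrow> real \<Rightarrow> real" where
  "Gcdf \<theta> h u y1 y2 = exp (- Vexp \<theta> h u y1 y2)"

definition gdens :: "'d::finite par \<Rightarrow> real ^ 'd \<Rightarrow> real \<Rightarrow> real \<Rightarrow> real \<Rightarrow> real" where
  "gdens \<theta> h u y1 y2 = deriv (\<lambda>a. deriv (\<lambda>b. Gcdf \<theta> h u a b) y2) y1"

definition pderiv_par :: "(bool \<times> 'd::finite option) \<Rightarrow> ('d par \<Rightarrow> real) \<Rightarrow> 'd par \<Rightarrow> real" where
  "pderiv_par i f \<theta> = deriv (\<lambda>x. f (\<chi> k. if k = i then x else \<theta> $ k)) (\<theta> $ i)"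

definition admissible :: "'d::finite par set" where
  "admissible = {\<theta>. \<forall>j. 0 < \<theta> $ (False, j) \<and> 0 < \<theta> $ (True, j) \<and> \<theta> $ (True, j) \<le> 2}"

text \<open>Identifiability condition for maximal lags r, p (design mask h <= r, 0 <= u <= p),
  nonzero lags only (g is undefined at lag 0).\<close>
definition identifiable :: "'d::finite par set \<Rightarrow> nat ^ 'd \<Rightarrow> nat \<Rightarrow> bool" where
  "identifiable \<Theta> r p \<longleftrightarrow>
     (\<forall>\<theta>\<in>\<Theta>. \<forall>\<theta>'\<in>\<Theta>. \<theta> = \<theta>' \<longleftrightarrow>
        (\<forall>h u. (\<forall>j. h $ j \<le> r $ j) \<longrightarrow> u \<le> p \<longrightarrow> (h, u) \<noteq> (0, 0) \<longrightarrow>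
           (\<forall>y1 y2. 0 < y1 \<longrightarrow> 0 < y2 \<longrightarrow>
              gdens \<theta> (\<chi> j. real (h $ j)) (real u) y1 y2
              = gdens \<theta>' (\<chi> j. real (h $ j)) (real u) y1 y2)))"

end

theory Submission
  imports Defs
begin


abbreviation "phi \<equiv> std_normal_density"

lemma phi_int_set: "set_integrable lborel A phi" if "A \<in> sets lborel"
  unfolding set_integrable_def
  using integrable_mult_indicator[OF that integrable_normal_density[of 1 0]] by simp

lemma Phi_interval: "Phi x = (LBINT t=-\<infinity>..ereal x. phi t)"
  unfolding Phi_def
  by (subst interval_integral_Ioc') (auto intro!: arg_cong[where f="\<lambda>A. set_lebesgue_integral lborel A phi"])

lemma phi_interval_integrable: "interval_lebesgue_integrable lborel a b phi"
  unfolding interval_lebesgue_integrable_def by (auto intro!: phi_int_set)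

lemma Phi_split: "Phi x = Phi 0 + (LBINT t=ereal 0..ereal x. phi t)"
  unfolding Phi_interval
  by (subst interval_integral_sum[symmetric, where b="ereal 0"]) (auto intro!: phi_interval_integrable)

lemma phi_cont: "continuous_on A phi"
  unfolding std_normal_density_def by (intro continuous_intros) auto

lemma Phi_deriv: "(Phi has_real_derivative phi x) (at x)"
proof -
  define a where "a = min x 0 - 1"
  define b where "b = max x 0 + 1"
  have "((\<lambda>u. LBINT y=ereal 0..ereal u. phi y) has_vector_derivative (phi x)) (at x within {a..b})"
    by (rule interval_integral_FTC2) (auto simp: a_def b_def intro: phi_cont)
  then have "((\<lambda>u. LBINT y=ereal 0..ereal u. phi y) has_vector_derivative (phi x)) (at x)"
    by (subst (asm) at_within_Icc_at) (auto simp: a_def b_def)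
  then have "((\<lambda>u. Phi 0 + (LBINT y=ereal 0..ereal u. phi y)) has_real_derivative (phi x)) (at x)"
    by (auto simp: has_real_derivative_iff_has_vector_derivative intro!: derivative_eq_intros)
  then show ?thesis by (subst Phi_split[abs_def]) simp
qed

lemma Phi_nonneg: "0 \<le> Phi x"
  unfolding Phi_def set_lebesgue_integral_def
  by (intro integral_nonneg_AE) (auto split: split_indicator)

lemma Phi_le1: "Phi x \<le> 1"
proof -
  have "Phi x \<le> (\<integral>t. phi t \<partial>lborel)"
    unfolding Phi_def set_lebesgue_integral_def
    by (intro integral_mono integrable_mult_indicator) (auto split: split_indicator)
  then show ?thesis by simp
qed

lemma Phi_mono: "x \<le> y \<Longrightarrow> Phi x \<le> Phi y"
  unfolding Phi_def set_lebesgue_integral_def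
  by (intro integral_mono integrable_mult_indicator) (auto split: split_indicator)

lemma Phi_strict_mono: "x < y \<Longrightarrow> Phi x < Phi y"
  by (rule DERIV_pos_imp_increasing) (auto intro!: exI Phi_deriv normal_density_pos)

lemma Phi_pos: "0 < Phi x"
  using Phi_strict_mono[of "x-1" x] Phi_nonneg[of "x-1"] by simp


definition wq :: "real \<Rightarrow> real \<Rightarrow> real" where "wq c A = c / A + A / 2"
definition wq1 :: "real \<Rightarrow> real \<Rightarrow> real" where "wq1 c A = - c / A^2 + 1 / 2"
definition wq2 :: "real \<Rightarrow> real \<Rightarrow> real" where "wq2 c A = 2 * c / A^3"

lemma wq_deriv: "A \<noteq> 0 \<Longrightarrow> (wq c has_real_derivative wq1 c A) (at A)"
  unfolding wq_def[abs_def] wq1_def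
  by (auto intro!: derivative_eq_intros simp: field_simps power2_eq_square)

lemma wq1_deriv: "A \<noteq> 0 \<Longrightarrow> (wq1 c has_real_derivative wq2 c A) (at A)"
  unfolding wq1_def[abs_def] wq2_def
  by (auto intro!: derivative_eq_intros simp: field_simps power2_eq_square power3_eq_cube)

lemma phi_deriv: "(phi has_real_derivative (- x * phi x)) (at x)"
  unfolding std_normal_density_def[abs_def]
  by (auto intro!: derivative_eq_intros simp: field_simps power2_eq_square)

lemma Phi_wq: "A \<noteq> 0 \<Longrightarrow> ((\<lambda>A. Phi (wq c A)) has_real_derivative phi (wq c A) * wq1 c A) (at A)"
  by (rule DERIV_chain2[OF Phi_deriv wq_deriv])

lemma phi_wq: "A \<noteq> 0 \<Longrightarrow> ((\<lambda>A. phi (wq c A)) has_real_derivative (- wq c A * phi (wq c A)) * wq1 c A) (at A)"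
  by (rule DERIV_chain2[OF phi_deriv wq_deriv])

definition rr :: "real \<Rightarrow> real \<Rightarrow> real" where
  "rr z A = wq z A * wq1 z A / A + 1 / A^2"
definition rr1 :: "real \<Rightarrow> real \<Rightarrow> real" where
  "rr1 z A = (wq1 z A ^ 2 + wq z A * wq2 z A) / A - wq z A * wq1 z A / A^2 - 2 / A^3"

lemma rr_deriv: "A \<noteq> 0 \<Longrightarrow> (rr z has_real_derivative rr1 z A) (at A)"
  unfolding rr_def[abs_def] rr1_def
  by (auto intro!: derivative_eq_intros wq_deriv wq1_deriv simp: field_simps power2_eq_square power3_eq_cube)

definition NA :: "real \<Rightarrow> real \<Rightarrow> real \<Rightarrow> real" where
  "NA y2 z A = Phi (wq z A) * Phi (wq (-z) A) + y2 * phi (wq z A) / A"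
definition NA1 :: "real \<Rightarrow> real \<Rightarrow> real \<Rightarrow> real" where
  "NA1 y2 z A = phi (wq z A) * wq1 z A * Phi (wq (-z) A) + Phi (wq z A) * phi (wq (-z) A) * wq1 (-z) A
     - y2 * phi (wq z A) * rr z A"
definition NA2 :: "real \<Rightarrow> real \<Rightarrow> real \<Rightarrow> real" where
  "NA2 y2 z A = (phi (wq z A) * wq2 z A - wq z A * phi (wq z A) * wq1 z A ^ 2) * Phi (wq (-z) A)
     + 2 * phi (wq z A) * wq1 z A * phi (wq (-z) A) * wq1 (-z) A
     + Phi (wq z A) * (phi (wq (-z) A) * wq2 (-z) A - wq (-z) A * phi (wq (-z) A) * wq1 (-z) A ^ 2)
     + y2 * phi (wq z A) * (wq z A * wq1 z A * rr z A - rr1 z A)"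

lemma NA_deriv: "A \<noteq> 0 \<Longrightarrow> (NA y2 z has_real_derivative NA1 y2 z A) (at A)"
  unfolding NA_def[abs_def] NA1_def
  apply (rule DERIV_cong)
  apply (rule derivative_intros Phi_wq phi_wq | assumption)+
  apply (simp add: rr_def field_simps power2_eq_square)
  done

lemma NA1_deriv: "A \<noteq> 0 \<Longrightarrow> (NA1 y2 z has_real_derivative NA2 y2 z A) (at A)"
  unfolding NA1_def[abs_def] NA2_def
  apply (rule DERIV_cong)
  apply (rule derivative_intros Phi_wq phi_wq wq1_deriv rr_deriv | assumption)+
  apply (simp add: field_simps power2_eq_square)
  done

definition VA :: "real \<Rightarrow> real \<Rightarrow> real \<Rightarrow> real \<Rightarrow> real" where
  "VA B1 B2 z A = B1 * Phi (wq z A) + B2 * Phi (wq (-z) A)"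
definition VA1 :: "real \<Rightarrow> real \<Rightarrow> real \<Rightarrow> real \<Rightarrow> real" where
  "VA1 B1 B2 z A = B1 * (phi (wq z A) * wq1 z A) + B2 * (phi (wq (-z) A) * wq1 (-z) A)"
definition VA2 :: "real \<Rightarrow> real \<Rightarrow> real \<Rightarrow> real \<Rightarrow> real" where
  "VA2 B1 B2 z A = B1 * (phi (wq z A) * wq2 z A - wq z A * phi (wq z A) * wq1 z A ^ 2)
     + B2 * (phi (wq (-z) A) * wq2 (-z) A - wq (-z) A * phi (wq (-z) A) * wq1 (-z) A ^ 2)"

lemma VA_deriv: "A \<noteq> 0 \<Longrightarrow> (VA B1 B2 z has_real_derivative VA1 B1 B2 z A) (at A)"
  unfolding VA_def[abs_def] VA1_def
  apply (rule DERIV_cong)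
  apply (rule derivative_intros Phi_wq phi_wq | assumption)+
  apply (simp add: field_simps)
  done

lemma VA1_deriv: "A \<noteq> 0 \<Longrightarrow> (VA1 B1 B2 z has_real_derivative VA2 B1 B2 z A) (at A)"
  unfolding VA1_def[abs_def] VA2_def
  apply (rule DERIV_cong)
  apply (rule derivative_intros Phi_wq phi_wq wq1_deriv | assumption)+
  apply (simp add: field_simps power2_eq_square)
  done

lemma NA_pos: "0 < A \<Longrightarrow> 0 \<le> y2 \<Longrightarrow> 0 < NA y2 z A"
  unfolding NA_def by (intro add_pos_nonneg mult_pos_pos Phi_pos divide_nonneg_pos mult_nonneg_nonneg) auto

definition LGA :: "real \<Rightarrow> real \<Rightarrow> real \<Rightarrow> real \<Rightarrow> real \<Rightarrow> real" where
  "LGA B1 B2 y2 z A = - VA B1 B2 z A + ln (NA y2 z A)"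
definition LGA1 :: "real \<Rightarrow> real \<Rightarrow> real \<Rightarrow> real \<Rightarrow> real \<Rightarrow> real" where
  "LGA1 B1 B2 y2 z A = - VA1 B1 B2 z A + NA1 y2 z A / NA y2 z A"
definition LGA2 :: "real \<Rightarrow> real \<Rightarrow> real \<Rightarrow> real \<Rightarrow> real \<Rightarrow> real" where
  "LGA2 B1 B2 y2 z A = - VA2 B1 B2 z A + NA2 y2 z A / NA y2 z A - (NA1 y2 z A / NA y2 z A)^2"

lemma LGA_deriv: "0 < A \<Longrightarrow> 0 \<le> y2 \<Longrightarrow> (LGA B1 B2 y2 z has_real_derivative LGA1 B1 B2 y2 z A) (at A)"
  unfolding LGA_def[abs_def] LGA1_def
  using NA_pos[of A y2 z]
  by (auto intro!: derivative_eq_intros VA_deriv NA_deriv simp: field_simps)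

lemma LGA1_deriv: "0 < A \<Longrightarrow> 0 \<le> y2 \<Longrightarrow> (LGA1 B1 B2 y2 z has_real_derivative LGA2 B1 B2 y2 z A) (at A)"
  unfolding LGA1_def[abs_def] LGA2_def
  using NA_pos[of A y2 z]
  by (auto intro!: derivative_eq_intros VA1_deriv NA_deriv NA1_deriv simp: field_simps power2_eq_square)

definition LGD :: "real \<Rightarrow> real \<Rightarrow> real \<Rightarrow> real \<Rightarrow> real \<Rightarrow> real" where
  "LGD B1 B2 y2 z D = LGA B1 B2 y2 z (sqrt (2 * D))"
definition LGD1 :: "real \<Rightarrow> real \<Rightarrow> real \<Rightarrow> real \<Rightarrow> real \<Rightarrow> real" where
  "LGD1 B1 B2 y2 z D = LGA1 B1 B2 y2 z (sqrt (2 * D)) / sqrt (2 * D)"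
definition LGD2 :: "real \<Rightarrow> real \<Rightarrow> real \<Rightarrow> real \<Rightarrow> real \<Rightarrow> real" where
  "LGD2 B1 B2 y2 z D = (LGA2 B1 B2 y2 z (sqrt (2 * D)) - LGA1 B1 B2 y2 z (sqrt (2 * D)) / sqrt (2 * D))
      / (2 * D)"

lemma sqrt2_deriv: "0 < D \<Longrightarrow> ((\<lambda>D. sqrt (2 * D)) has_real_derivative 1 / sqrt (2 * D)) (at D)"
  by (auto intro!: derivative_eq_intros simp: field_simps real_sqrt_mult)

lemma LGD_deriv: assumes a: "0 < D" "0 \<le> y2"
  shows "(LGD B1 B2 y2 z has_real_derivative LGD1 B1 B2 y2 z D) (at D)"
proof -
  have "((\<lambda>D. LGA B1 B2 y2 z (sqrt(2*D))) has_real_derivative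
      LGA1 B1 B2 y2 z (sqrt(2*D)) * (1/sqrt(2*D))) (at D)"
    by (rule DERIV_chain2[OF LGA_deriv sqrt2_deriv]) (use a in auto)
  then show ?thesis by (simp add: LGD_def[abs_def] LGD1_def)
qed

lemma LGD1_deriv: "0 < D \<Longrightarrow> 0 \<le> y2 \<Longrightarrow> (LGD1 B1 B2 y2 z has_real_derivative LGD2 B1 B2 y2 z D) (at D)"
  unfolding LGD1_def[abs_def] LGD2_def
  apply (rule DERIV_cong)
   apply (rule DERIV_divide)
     apply (rule DERIV_chain2[OF LGA1_deriv sqrt2_deriv]) 
       apply (auto intro!: sqrt2_deriv)
  done


definition W :: "real \<Rightarrow> real \<Rightarrow> real \<Rightarrow> real" where
  "W D a b = ln (b / a) / sqrt (2 * D) + sqrt (D / 2)"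
definition VV :: "real \<Rightarrow> real \<Rightarrow> real \<Rightarrow> real" where
  "VV D a b = 1 / a * Phi (W D a b) + 1 / b * Phi (W D b a)"

lemma sqrt_half: "0 \<le> D \<Longrightarrow> sqrt (D / 2) = sqrt (2 * D) / 2"
  by (rule real_sqrt_unique) (auto simp: power_divide)

lemma W_wq: "0 \<le> D \<Longrightarrow> W D a b = wq (ln (b / a)) (sqrt (2 * D))"
  by (simp add: W_def wq_def sqrt_half)

lemma ln_swap: "0 < (a::real) \<Longrightarrow> 0 < b \<Longrightarrow> ln (a / b) = - ln (b / a)"
  by (simp add: ln_div[of a b] ln_div[of b a])

lemma Vexp_VV: "Vexp \<theta> h u a b = VV (delta \<theta> h u) a b"
  by (simp add: Vexp_def VV_def W_def Let_def)

lemma sq_expand: "(A::real) \<noteq> 0 \<Longrightarrow> (z / A + A / 2)\<^sup>2 = z^2 / A^2 + z + A^2/4"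
  by (simp add: power2_eq_square field_simps)

lemma phi_ident:
  assumes "0 < D" "0 < a" "0 < b"
  shows "phi (W D a b) * b = phi (W D b a) * a"
proof -
  define A where "A = sqrt (2 * D)"
  define z where "z = ln (b / a)"
  have A: "A > 0" using assms by (simp add: A_def)
  have le: "0 \<le> D" using assms by simp
  have Wab: "W D a b = z / A + A / 2" by (simp only: W_wq[OF le] wq_def A_def z_def)
  have Wba: "W D b a = (- z) / A + A / 2"
    by (simp only: W_wq[OF le] wq_def A_def z_def ln_swap[OF assms(2,3)])
  have bz: "b = a * exp z" unfolding z_def using assms by (subst exp_ln) auto
  have s1: "(z / A + A / 2)\<^sup>2 = z^2 / A^2 + z + A^2/4" using A by (intro sq_expand) auto
  have s2: "((- z) / A + A / 2)\<^sup>2 = z^2 / A^2 + (- z) + A^2/4" 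
    using sq_expand[of A "- z"] A by simp
  have e: "- (z / A + A / 2)\<^sup>2 / 2 + z = - ((- z) / A + A / 2)\<^sup>2 / 2"
    unfolding s1 s2 by (simp add: field_simps)
  have "phi (W D a b) * b = (exp (- (z / A + A / 2)\<^sup>2 / 2) * exp z) * a / sqrt (2 * pi)"
    unfolding Wab by (subst bz, simp add: std_normal_density_def)
  also have "\<dots> = exp (- ((- z) / A + A / 2)\<^sup>2 / 2) * a / sqrt (2 * pi)"
    by (simp only: exp_add[symmetric] e)
  also have "\<dots> = phi (W D b a) * a"
    by (subst Wba) (simp add: std_normal_density_def)
  finally show ?thesis .
qed

lemma W_deriv2:
  assumes "0 < D" "0 < a" "0 < b"
  shows "((\<lambda>b. W D a b) has_real_derivative 1 / (b * sqrt (2 * D))) (at b)"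
  unfolding W_def using assms
  by (auto intro!: derivative_eq_intros simp: field_simps)

lemma W_deriv1:
  assumes "0 < D" "0 < a" "0 < b"
  shows "((\<lambda>b. W D b a) has_real_derivative - 1 / (b * sqrt (2 * D))) (at b)"
  unfolding W_def using assms
  by (auto intro!: derivative_eq_intros simp: field_simps)

lemma VV_sym: "VV D a b = VV D b a"
  unfolding VV_def by simp

lemma VV_deriv2:
  assumes "0 < D" "0 < a" "0 < b"
  shows "((\<lambda>b. VV D a b) has_real_derivative - Phi (W D b a) / b^2) (at b)"
proof -
  have d1: "((\<lambda>b. Phi (W D a b)) has_real_derivative phi (W D a b) * (1/(b * sqrt(2*D)))) (at b)"
    by (rule DERIV_chain2[OF Phi_deriv W_deriv2[OF assms]])
  have d2: "((\<lambda>b. Phi (W D b a)) has_real_derivative phi (W D b a) * (- 1/(b * sqrt(2*D)))) (at b)"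
    by (rule DERIV_chain2[OF Phi_deriv W_deriv1[OF assms]])
  have d3: "((\<lambda>b. 1/b) has_real_derivative -1/b^2) (at b)"
    using assms by (auto intro!: derivative_eq_intros simp: power2_eq_square)
  have f: "((\<lambda>b. 1 / a * Phi (W D a b) + 1 / b * Phi (W D b a)) has_real_derivative
     1 / a * (phi (W D a b) * (1 / (b * sqrt (2 * D)))) + ((- 1 / b^2) * Phi (W D b a) 
      + 1 / b * (phi (W D b a) * (- 1 / (b * sqrt (2 * D)))))) (at b)"
    apply (rule DERIV_add)
     apply (rule DERIV_cmult[OF d1])
    apply (rule DERIV_cong)
     apply (rule DERIV_mult[OF d3 d2])
    by (simp add: algebra_simps)
  have eq: "1 / a * (phi (W D a b) * (1 / (b * sqrt (2 * D)))) + ((- 1 / b^2) * Phi (W D b a) 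
      + 1 / b * (phi (W D b a) * (- 1 / (b * sqrt (2 * D))))) = - Phi (W D b a) / b^2"
  proof -
    have e: "phi (W D a b) / a = phi (W D b a) / b"
      using phi_ident[OF assms] assms by (simp add: field_simps)
    have "1 / a * (phi (W D a b) * (1 / (b * sqrt (2 * D)))) = phi (W D a b) / a * (1 / (b * sqrt (2 * D)))"
      by simp
    also have "\<dots> = phi (W D b a) / b * (1 / (b * sqrt (2 * D)))" by (simp only: e)
    finally have x: "1 / a * (phi (W D a b) * (1 / (b * sqrt (2 * D)))) = phi (W D b a) / b * (1 / (b * sqrt (2 * D)))" .
    have z: "1 / b * (phi (W D b a) * (- 1 / (b * sqrt (2 * D)))) = - (phi (W D b a) / b * (1 / (b * sqrt (2 * D))))"
      by simp
    have y: "(- 1 / b^2) * Phi (W D b a) = - Phi (W D b a) / b^2" by simp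
    show ?thesis using x y z by linarith
  qed
  have eqf: "VV D a = (\<lambda>b. 1 / a * Phi (W D a b) + 1 / b * Phi (W D b a))"
    by (simp add: VV_def fun_eq_iff)
  show ?thesis unfolding eqf by (rule DERIV_cong[OF f eq])
qed

lemma VV_deriv1:
  assumes "0 < D" "0 < a" "0 < b"
  shows "((\<lambda>a. VV D a b) has_real_derivative - Phi (W D a b) / a^2) (at a)"
proof -
  have e: "(\<lambda>a. VV D a b) = VV D b" by (rule ext, rule VV_sym)
  show ?thesis unfolding e by (rule VV_deriv2[of D b a]) (use assms in auto)
qed

lemma Gcdf_VV: "Gcdf \<theta> h u a b = exp (- VV (delta \<theta> h u) a b)"
  by (simp add: Gcdf_def Vexp_VV)

lemma expVV_deriv2:
  assumes "0 < D" "0 < a" "0 < b"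
  shows "((\<lambda>b. exp (- VV D a b)) has_real_derivative exp (- VV D a b) * (Phi (W D b a) / b^2)) (at b)"
  using DERIV_chain2[OF DERIV_exp DERIV_minus[OF VV_deriv2[OF assms]]] by simp

lemma expVV_deriv1:
  assumes "0 < D" "0 < a" "0 < b"
  shows "((\<lambda>a. exp (- VV D a b)) has_real_derivative exp (- VV D a b) * (Phi (W D a b) / a^2)) (at a)"
  using DERIV_chain2[OF DERIV_exp DERIV_minus[OF VV_deriv1[OF assms]]] by simp

lemma gdens_closed:
  assumes D: "0 < delta \<theta> h u" and ab: "0 < a" "0 < b"
  shows "gdens \<theta> h u a b = exp (- VV (delta \<theta> h u) a b) *
     (Phi (W (delta \<theta> h u) a b) / a^2 * (Phi (W (delta \<theta> h u) b a) / b^2)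
      + phi (W (delta \<theta> h u) b a) / (a * sqrt (2 * delta \<theta> h u) * b^2))"
proof -
  define D where "D = delta \<theta> h u"
  have D0: "0 < D" using D by (simp add: D_def)
  define H where "H a = exp (- VV D a b) * (Phi (W D b a) / b^2)" for a
  have inner: "deriv (\<lambda>b. Gcdf \<theta> h u a' b) b = H a'" if "0 < a'" for a'
    unfolding Gcdf_VV H_def D_def[symmetric]
    by (rule DERIV_imp_deriv, rule expVV_deriv2) (use D0 ab that in auto)
  have ev: "eventually (\<lambda>a'. deriv (\<lambda>b. Gcdf \<theta> h u a' b) b = H a') (nhds a)"
    using eventually_nhds_in_open[of "{0<..}" a] ab
    by (auto elim!: eventually_mono intro: inner)
  have gd: "gdens \<theta> h u a b = deriv H a"
    unfolding gdens_def by (rule deriv_cong_ev[OF ev refl])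
  have dW: "((\<lambda>a. Phi (W D b a)) has_real_derivative phi (W D b a) * (1 / (a * sqrt (2 * D)))) (at a)"
    by (rule DERIV_chain2[OF Phi_deriv W_deriv2]) (use D0 ab in auto)
  have "(H has_real_derivative
      exp (- VV D a b) * (Phi (W D a b) / a^2) * (Phi (W D b a) / b^2)
      + exp (- VV D a b) * (phi (W D b a) * (1 / (a * sqrt (2 * D))) / b^2)) (at a)"
    unfolding H_def[abs_def]
    apply (rule DERIV_cong)
    apply (rule DERIV_mult[OF expVV_deriv1[OF D0 ab] DERIV_divide[OF dW DERIV_const]])
    using ab by (auto simp: field_simps power2_eq_square)
  then have "deriv H a = exp (- VV D a b) * (Phi (W D a b) / a^2) * (Phi (W D b a) / b^2)
      + exp (- VV D a b) * (phi (W D b a) * (1 / (a * sqrt (2 * D))) / b^2)"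
    by (rule DERIV_imp_deriv)
  then show ?thesis unfolding gd D_def[symmetric] by (simp add: algebra_simps)
qed


lemma alg1:
  fixes a b A p1 p2 P1 P2 :: real
  assumes "p1 * b = p2 * a" "0 < a" "0 < b" "0 < A"
  shows "P1 / a^2 * (P2 / b^2) + p2 / (a * A * b^2) = (P1 * P2 + b * p1 / A) / (a^2 * b^2)"
proof -
  have "p2 / (a * A * b^2) = (p2 * a) / (a^2 * A * b^2)" using assms by (simp add: power2_eq_square)
  also have "\<dots> = b * p1 / A / (a^2 * b^2)" using assms(1) by (simp add: mult.commute)
  finally show ?thesis using assms by (simp add: add_divide_distrib power2_eq_square)
qed

lemma ln_alg:
  fixes N a b V :: real
  assumes "0 < N" "0 < a" "0 < b"
  shows "ln (exp (- V) * (N / (a^2 * b^2))) = - V + ln N - 2 * ln a - 2 * ln b"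
proof -
  have "ln (exp (- V) * (N / (a^2 * b^2))) = ln (exp (- V)) + ln (N / (a^2 * b^2))"
    by (rule ln_mult_pos) (use assms in auto)
  also have "ln (N / (a^2 * b^2)) = ln N - ln (a^2 * b^2)" by (rule ln_divide_pos) (use assms in auto)
  also have "ln (a^2 * b^2) = ln (a^2) + ln (b^2)" by (rule ln_mult_pos) (use assms in auto)
  also have "ln (a^2) = 2 * ln a" using assms by (simp add: ln_realpow)
  also have "ln (b^2) = 2 * ln b" using assms by (simp add: ln_realpow)
  finally show ?thesis by simp
qed

lemma lngd:
  assumes D: "0 < delta \<theta> h u" and ab: "0 < a" "0 < b"
  shows "ln (gdens \<theta> h u a b) = LGD (1/a) (1/b) b (ln (b/a)) (delta \<theta> h u) - 2 * ln a - 2 * ln b"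
proof -
  define D where "D = delta \<theta> h u"
  define A where "A = sqrt (2 * D)"
  define z where "z = ln (b / a)"
  have D0: "0 < D" using D by (simp add: D_def)
  have A0: "0 < A" using D0 by (simp add: A_def)
  have le: "0 \<le> D" using D0 by simp
  have w1: "W D a b = wq z A" by (simp only: W_wq[OF le] A_def z_def)
  have w2: "W D b a = wq (-z) A" by (simp only: W_wq[OF le] A_def z_def ln_swap[OF ab])
  have pid: "phi (wq z A) * b = phi (wq (-z) A) * a"
    using phi_ident[OF D0 ab] unfolding w1 w2 .
  have VVe: "VV D a b = VA (1/a) (1/b) z A" unfolding VV_def VA_def w1 w2 by simp
  have "gdens \<theta> h u a b = exp (- VV D a b) *
     (Phi (wq z A) / a^2 * (Phi (wq (-z) A) / b^2) + phi (wq (-z) A) / (a * A * b^2))"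
    using gdens_closed[OF D ab] unfolding D_def[symmetric] A_def[symmetric] w1 w2 .
  also have "Phi (wq z A) / a^2 * (Phi (wq (-z) A) / b^2) + phi (wq (-z) A) / (a * A * b^2)
      = NA b z A / (a^2 * b^2)"
    unfolding NA_def by (rule alg1[OF pid ab A0])
  finally have g: "gdens \<theta> h u a b = exp (- VV D a b) * (NA b z A / (a^2 * b^2))" .
  have NA0: "0 < NA b z A" using NA_pos[OF A0] ab by simp
  have "ln (gdens \<theta> h u a b) = - VV D a b + ln (NA b z A) - 2 * ln a - 2 * ln b"
    unfolding g by (rule ln_alg[OF NA0 ab])
  also have "\<dots> = LGD (1/a) (1/b) b z D - 2 * ln a - 2 * ln b"
    unfolding LGD_def LGA_def A_def[symmetric] VVe by simp
  finally show ?thesis unfolding D_def z_def .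
qed


definition vv :: "real ^ 'd \<Rightarrow> real \<Rightarrow> 'd option \<Rightarrow> real" where
  "vv h u k = (case k of Some j \<Rightarrow> h $ j | None \<Rightarrow> u)"

lemma delta_alt: "delta \<theta> h u = (\<Sum>k\<in>UNIV. \<theta> $ (False, k) * \<bar>vv h u k\<bar> powr \<theta> $ (True, k))"
proof -
  have "(\<Sum>k\<in>UNIV. \<theta> $ (False, k) * \<bar>vv h u k\<bar> powr \<theta> $ (True, k))
     = \<theta> $ (False, None) * \<bar>u\<bar> powr \<theta> $ (True, None) +
       (\<Sum>k\<in>range Some. \<theta> $ (False, k) * \<bar>vv h u k\<bar> powr \<theta> $ (True, k))"
    unfolding UNIV_option_conv by (subst sum.insert) (auto simp: vv_def)
  also have "(\<Sum>k\<in>range Some. \<theta> $ (False, k) * \<bar>vv h u k\<bar> powr \<theta> $ (True, k))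
     = (\<Sum>j\<in>UNIV. \<theta> $ (False, Some j) * \<bar>h $ j\<bar> powr \<theta> $ (True, Some j))"
    by (subst sum.reindex) (auto simp: vv_def)
  finally show ?thesis unfolding delta_def by simp
qed

definition upd :: "'d::finite par \<Rightarrow> (bool \<times> 'd option) \<Rightarrow> real \<Rightarrow> 'd par" where
  "upd \<theta> i x = (\<chi> k. if k = i then x else \<theta> $ k)"

lemma upd_nth: "upd \<theta> i x $ k = (if k = i then x else \<theta> $ k)"
  by (simp add: upd_def)

lemma upd_same: "upd \<theta> i (\<theta> $ i) = \<theta>"
  by (simp add: upd_def vec_eq_iff)

lemma pderiv_par_upd: "pderiv_par i f \<theta> = deriv (\<lambda>x. f (upd \<theta> i x)) (\<theta> $ i)"
  by (simp add: pderiv_par_def upd_def)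

definition dd :: "real ^ 'd::finite \<Rightarrow> real \<Rightarrow> (bool \<times> 'd option) \<Rightarrow> 'd par \<Rightarrow> real" where
  "dd h u i \<theta> = (if fst i then \<theta> $ (False, snd i) * (ln \<bar>vv h u (snd i)\<bar> * \<bar>vv h u (snd i)\<bar> powr \<theta> $ i)
      else \<bar>vv h u (snd i)\<bar> powr \<theta> $ (True, snd i))"

lemma powr_exp_deriv: "((\<lambda>x. (a::real) powr x) has_real_derivative ln a * a powr x) (at x)"
  using has_real_derivative_const_powr[of "\<lambda>x. x" "\<lambda>_. 1" a] by simp

lemma delta_upd_deriv:
  "((\<lambda>x. delta (upd \<theta> i x) h u) has_real_derivative dd h u i (upd \<theta> i x)) (at x)"
proof -
  obtain b k0 where i: "i = (b, k0)" by (cases i)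
  have tm: "((\<lambda>x. upd \<theta> i x $ (False, k) * \<bar>vv h u k\<bar> powr upd \<theta> i x $ (True, k)) has_real_derivative
      (if k = k0 then dd h u i (upd \<theta> i x) else 0)) (at x)" for k
  proof (cases "k = k0")
    case True
    show ?thesis
    proof (cases b)
      case True
      then show ?thesis using \<open>k = k0\<close> i
        by (auto simp: upd_nth dd_def intro!: derivative_eq_intros powr_exp_deriv)
    next
      case False
      then show ?thesis using \<open>k = k0\<close> i
        by (auto simp: upd_nth dd_def intro!: derivative_eq_intros)
    qed
  next
    case False
    then show ?thesis using i by (auto simp: upd_nth intro!: derivative_eq_intros)
  qed
  have "((\<lambda>x. \<Sum>k\<in>UNIV. upd \<theta> i x $ (False, k) * \<bar>vv h u k\<bar> powr upd \<theta> i x $ (True, k)) has_real_derivative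
      (\<Sum>k\<in>UNIV. if k = k0 then dd h u i (upd \<theta> i x) else 0)) (at x)"
    by (rule DERIV_sum) (rule tm)
  then show ?thesis unfolding delta_alt by simp
qed

lemma delta_upd_deriv0:
  "((\<lambda>x. delta (upd \<theta> i x) h u) has_real_derivative dd h u i \<theta>) (at (\<theta> $ i))"
  using delta_upd_deriv[of \<theta> i h u "\<theta> $ i"] by (simp add: upd_same)

definition dd2 :: "real ^ 'd::finite \<Rightarrow> real \<Rightarrow> (bool \<times> 'd option) \<Rightarrow> (bool \<times> 'd option) \<Rightarrow> 'd par \<Rightarrow> real" where
  "dd2 h u i j \<theta> = (if snd i = snd j then
     (if fst i \<and> fst j then \<theta> $ (False, snd i) * (ln \<bar>vv h u (snd i)\<bar> * (ln \<bar>vv h u (snd i)\<bar> * \<bar>vv h u (snd i)\<bar> powr \<theta> $ (True, snd i)))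
      else if fst i \<or> fst j then ln \<bar>vv h u (snd i)\<bar> * \<bar>vv h u (snd i)\<bar> powr \<theta> $ (True, snd i) else 0)
     else 0)"

lemma dd_upd_deriv:
  "((\<lambda>x. dd h u j (upd \<theta> i x)) has_real_derivative dd2 h u i j (upd \<theta> i x)) (at x)"
proof -
  obtain b k0 where i: "i = (b, k0)" by (cases i)
  obtain b' k1 where j: "j = (b', k1)" by (cases j)
  show ?thesis
  proof (cases "k0 = k1")
    case False
    have "(\<lambda>x. dd h u j (upd \<theta> i x)) = (\<lambda>x. dd h u j \<theta>)"
      using False i j by (auto simp: dd_def upd_nth fun_eq_iff)
    moreover have "dd2 h u i j (upd \<theta> i x) = 0" using False i j by (simp add: dd2_def)
    ultimately show ?thesis by simp
  next
    case True
    then show ?thesis using i j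
      by (cases b; cases b') (auto simp: dd_def dd2_def upd_nth intro!: derivative_eq_intros powr_exp_deriv)
  qed
qed

lemma dd_upd_deriv0:
  "((\<lambda>x. dd h u j (upd \<theta> i x)) has_real_derivative dd2 h u i j \<theta>) (at (\<theta> $ i))"
  using dd_upd_deriv[of h u j \<theta> i "\<theta> $ i"] by (simp add: upd_same)

lemma DERIV_pos_ev:
  assumes "(g has_real_derivative g') (at x)" "0 < g x"
  shows "eventually (\<lambda>y. 0 < g y) (nhds x)"
proof -
  have "isCont g x" by (rule DERIV_isCont[OF assms(1)])
  then have "(g \<longlongrightarrow> g x) (nhds x)" by (simp add: tendsto_nhds_iff isCont_def)
  then show ?thesis by (rule order_tendstoD(1)) (rule assms(2))
qed

definition LGf :: "real \<Rightarrow> real \<Rightarrow> real \<Rightarrow> real" where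
  "LGf a b D = LGD (1/a) (1/b) b (ln (b/a)) D - 2 * ln a - 2 * ln b"

lemma pd1:
  assumes "0 < delta \<theta> h u" "0 < a" "0 < b"
  shows "pderiv_par j (\<lambda>\<phi>. ln (gdens \<phi> h u a b)) \<theta>
      = LGD1 (1/a) (1/b) b (ln (b/a)) (delta \<theta> h u) * dd h u j \<theta>"
proof -
  have ev: "eventually (\<lambda>x. 0 < delta (upd \<theta> j x) h u) (nhds (\<theta> $ j))"
    by (rule DERIV_pos_ev[OF delta_upd_deriv0]) (simp add: upd_same assms)
  have ev2: "eventually (\<lambda>x. ln (gdens (upd \<theta> j x) h u a b) = LGf a b (delta (upd \<theta> j x) h u)) (nhds (\<theta> $ j))"
    using ev by eventually_elim (simp add: lngd assms LGf_def)
  have "((\<lambda>x. LGf a b (delta (upd \<theta> j x) h u)) has_real_derivative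
      LGD1 (1/a) (1/b) b (ln (b/a)) (delta \<theta> h u) * dd h u j \<theta>) (at (\<theta> $ j))"
    unfolding LGf_def
    apply (rule DERIV_cong)
     apply (rule DERIV_diff[OF DERIV_diff[OF DERIV_chain2[OF LGD_deriv delta_upd_deriv0] DERIV_const] DERIV_const])
    using assms by (auto simp: upd_same)
  then show ?thesis unfolding pderiv_par_upd
    by (subst deriv_cong_ev[OF ev2 refl]) (rule DERIV_imp_deriv)
qed

lemma pd2:
  assumes "0 < delta \<theta> h u" "0 < a" "0 < b"
  shows "pderiv_par i (pderiv_par j (\<lambda>\<phi>. ln (gdens \<phi> h u a b))) \<theta>
      = LGD2 (1/a) (1/b) b (ln (b/a)) (delta \<theta> h u) * dd h u i \<theta> * dd h u j \<theta>
        + LGD1 (1/a) (1/b) b (ln (b/a)) (delta \<theta> h u) * dd2 h u i j \<theta>"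
proof -
  have ev: "eventually (\<lambda>x. 0 < delta (upd \<theta> i x) h u) (nhds (\<theta> $ i))"
    by (rule DERIV_pos_ev[OF delta_upd_deriv0]) (simp add: upd_same assms)
  have ev2: "eventually (\<lambda>x. pderiv_par j (\<lambda>\<phi>. ln (gdens \<phi> h u a b)) (upd \<theta> i x)
      = LGD1 (1/a) (1/b) b (ln (b/a)) (delta (upd \<theta> i x) h u) * dd h u j (upd \<theta> i x)) (nhds (\<theta> $ i))"
    using ev by eventually_elim (rule pd1; use assms in auto)
  have "((\<lambda>x. LGD1 (1/a) (1/b) b (ln (b/a)) (delta (upd \<theta> i x) h u) * dd h u j (upd \<theta> i x)) has_real_derivative
      LGD2 (1/a) (1/b) b (ln (b/a)) (delta \<theta> h u) * dd h u i \<theta> * dd h u j \<theta>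
        + LGD1 (1/a) (1/b) b (ln (b/a)) (delta \<theta> h u) * dd2 h u i j \<theta>) (at (\<theta> $ i))"
    apply (rule DERIV_cong)
     apply (rule DERIV_mult[OF DERIV_chain2[OF LGD1_deriv delta_upd_deriv0] dd_upd_deriv0])
    using assms by (auto simp: upd_same)
  then show ?thesis unfolding pderiv_par_upd[of i "pderiv_par j (\<lambda>\<phi>. ln (gdens \<phi> h u a b))"]
    by (subst deriv_cong_ev[OF ev2 refl]) (rule DERIV_imp_deriv)
qed


lemma pb: "\<bar>x\<bar> \<le> X^i \<Longrightarrow> \<bar>y\<bar> \<le> X^j \<Longrightarrow> 0 \<le> X \<Longrightarrow> \<bar>x * y\<bar> \<le> X^(i+j)" for x y X :: real
  by (simp add: abs_mult power_add mult_mono)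

lemma pw: "1 \<le> X \<Longrightarrow> i \<le> j \<Longrightarrow> X^i \<le> X^j" for X :: real
  by (rule power_increasing)

lemma abs4: "\<bar>a - b + (c - d)\<bar> \<le> \<bar>a\<bar> + \<bar>b\<bar> + \<bar>c\<bar> + \<bar>d\<bar>" for a b c d :: real
  by arith

lemma abs7: "\<bar>x1 - x2 + 2 * x3 + (x4 - x5) + (x6 - x7)\<bar>
   \<le> \<bar>x1\<bar> + \<bar>x2\<bar> + 2 * \<bar>x3\<bar> + \<bar>x4\<bar> + \<bar>x5\<bar> + \<bar>x6\<bar> + \<bar>x7\<bar>" for x1 x2 x3 x4 x5 x6 x7 :: real
  by arith

lemma abs3: "\<bar>- a + b - c\<bar> \<le> \<bar>a\<bar> + \<bar>b\<bar> + \<bar>c\<bar>" for a b c :: real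
  by arith

lemma core_bound:
  fixes X w1 v1 u1 w2 v2 u2 r r1 P1 P2 p1 p2 N B1 B2 y2 :: real
  assumes X: "1 \<le> X"
    and w: "\<bar>w1\<bar> \<le> X^1" "\<bar>v1\<bar> \<le> X^1" "\<bar>u1\<bar> \<le> X^1" "\<bar>w2\<bar> \<le> X^1" "\<bar>v2\<bar> \<le> X^1" "\<bar>u2\<bar> \<le> X^1"
    and r: "\<bar>r\<bar> \<le> X^3" "\<bar>r1\<bar> \<le> X^4"
    and P: "\<bar>P1\<bar> \<le> X^0" "\<bar>P2\<bar> \<le> X^0" "\<bar>p1\<bar> \<le> X^0" "\<bar>p2\<bar> \<le> X^0"
    and N: "0 < N" and q: "\<bar>p1 / N\<bar> \<le> X^1" "\<bar>p2 / N\<bar> \<le> X^1" "\<bar>y2 * p1 / N\<bar> \<le> X^1"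
    and B: "\<bar>B1\<bar> \<le> X^1" "\<bar>B2\<bar> \<le> X^1"
  shows "\<bar>- (B1 * (p1 * v1) + B2 * (p2 * v2)) + (p1 * v1 * P2 + P1 * p2 * v2 - y2 * p1 * r) / N\<bar> \<le> 5 * X^4"
    and "\<bar>- (B1 * (p1 * u1 - w1 * p1 * v1^2) + B2 * (p2 * u2 - w2 * p2 * v2^2))
          + ((p1 * u1 - w1 * p1 * v1^2) * P2 + 2 * p1 * v1 * p2 * v2 + P1 * (p2 * u2 - w2 * p2 * v2^2)
             + y2 * p1 * (w1 * v1 * r - r1)) / N
          - ((p1 * v1 * P2 + P1 * p2 * v2 - y2 * p1 * r) / N)^2\<bar> \<le> 30 * X^8"
proof -
  have X0: "0 \<le> X" using X by simp
  define q1 where "q1 = p1 / N"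
  define q2 where "q2 = p2 / N"
  define q3 where "q3 = y2 * p1 / N"
  note qq = q[folded q1_def q2_def q3_def]
  have e1: "(p1 * v1 * P2 + P1 * p2 * v2 - y2 * p1 * r) / N = q1 * v1 * P2 + P1 * q2 * v2 - q3 * r"
    unfolding q1_def q2_def q3_def using N by (simp add: field_simps)
  have e2: "((p1 * u1 - w1 * p1 * v1^2) * P2 + 2 * p1 * v1 * p2 * v2 + P1 * (p2 * u2 - w2 * p2 * v2^2)
             + y2 * p1 * (w1 * v1 * r - r1)) / N
      = (q1 * u1 - w1 * q1 * v1^2) * P2 + 2 * q1 * v1 * p2 * v2 + P1 * (q2 * u2 - w2 * q2 * v2^2)
             + q3 * (w1 * v1 * r - r1)"
    unfolding q1_def q2_def q3_def using N by (simp add: field_simps)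
  have V1: "\<bar>B1 * (p1 * v1) + B2 * (p2 * v2)\<bar> \<le> 2 * X^4"
  proof -
    have "\<bar>B1 * (p1 * v1)\<bar> \<le> X^(1+(0+1))" by (intro pb B P w X0)
    moreover have "\<bar>B2 * (p2 * v2)\<bar> \<le> X^(1+(0+1))" by (intro pb B P w X0)
    moreover have "X^(1+(0+1)) \<le> X^4" by (rule pw[OF X]) simp
    ultimately show ?thesis by linarith
  qed
  have N1: "\<bar>q1 * v1 * P2 + P1 * q2 * v2 - q3 * r\<bar> \<le> 3 * X^4"
  proof -
    have "\<bar>q1 * v1 * P2\<bar> \<le> X^((1+1)+0)" by (intro pb qq P w X0)
    moreover have "\<bar>P1 * q2 * v2\<bar> \<le> X^((0+1)+1)" by (intro pb qq P w X0)
    moreover have "\<bar>q3 * r\<bar> \<le> X^(1+3)" by (intro pb qq r X0)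
    moreover have "X^((1+1)+0) \<le> X^4" by (rule pw[OF X]) simp
    moreover have "X^((0+1)+1) \<le> X^4" by (rule pw[OF X]) simp
    ultimately show ?thesis by simp
  qed
  show "\<bar>- (B1 * (p1 * v1) + B2 * (p2 * v2)) + (p1 * v1 * P2 + P1 * p2 * v2 - y2 * p1 * r) / N\<bar> \<le> 5 * X^4"
    unfolding e1 using V1 N1 by linarith
  have V2: "\<bar>B1 * (p1 * u1 - w1 * p1 * v1^2) + B2 * (p2 * u2 - w2 * p2 * v2^2)\<bar> \<le> 4 * X^8"
  proof -
    have s1: "\<bar>v1^2\<bar> \<le> X^(1+1)" using pb[OF w(2) w(2) X0] by (simp add: power2_eq_square)
    have s2: "\<bar>v2^2\<bar> \<le> X^(1+1)" using pb[OF w(5) w(5) X0] by (simp add: power2_eq_square)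
    have "\<bar>B1 * (p1 * u1)\<bar> \<le> X^(1+(0+1))" by (intro pb B P w X0)
    moreover have "\<bar>B1 * (w1 * p1 * v1^2)\<bar> \<le> X^(1+((1+0)+(1+1)))" by (intro pb B P w X0 s1)
    moreover have "\<bar>B2 * (p2 * u2)\<bar> \<le> X^(1+(0+1))" by (intro pb B P w X0)
    moreover have "\<bar>B2 * (w2 * p2 * v2^2)\<bar> \<le> X^(1+((1+0)+(1+1)))" by (intro pb B P w X0 s2)
    moreover have "X^(1+(0+1)) \<le> X^8" by (rule pw[OF X]) simp
    moreover have "X^(1+((1+0)+(1+1))) \<le> X^8" by (rule pw[OF X]) simp
    moreover have "\<bar>B1 * (p1 * u1 - w1 * p1 * v1^2) + B2 * (p2 * u2 - w2 * p2 * v2^2)\<bar>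
       \<le> \<bar>B1 * (p1 * u1)\<bar> + \<bar>B1 * (w1 * p1 * v1^2)\<bar> + \<bar>B2 * (p2 * u2)\<bar> + \<bar>B2 * (w2 * p2 * v2^2)\<bar>"
    proof -
      have "B1 * (p1 * u1 - w1 * p1 * v1^2) + B2 * (p2 * u2 - w2 * p2 * v2^2)
         = B1 * (p1 * u1) - B1 * (w1 * p1 * v1^2) + (B2 * (p2 * u2) - B2 * (w2 * p2 * v2^2))"
        by (simp add: algebra_simps)
      then show ?thesis using abs4 by metis
    qed
    ultimately show ?thesis by linarith
  qed
  have N2: "\<bar>(q1 * u1 - w1 * q1 * v1^2) * P2 + 2 * q1 * v1 * p2 * v2 + P1 * (q2 * u2 - w2 * q2 * v2^2)
             + q3 * (w1 * v1 * r - r1)\<bar> \<le> 10 * X^8"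
  proof -
    have s1: "\<bar>v1^2\<bar> \<le> X^(1+1)" using pb[OF w(2) w(2) X0] by (simp add: power2_eq_square)
    have s2: "\<bar>v2^2\<bar> \<le> X^(1+1)" using pb[OF w(5) w(5) X0] by (simp add: power2_eq_square)
    have a1: "\<bar>q1 * u1 * P2\<bar> \<le> X^((1+1)+0)" by (intro pb qq P w X0)
    have a2: "\<bar>w1 * q1 * v1^2 * P2\<bar> \<le> X^(((1+1)+(1+1))+0)" by (intro pb qq P w X0 s1)
    have a3: "\<bar>q1 * v1 * p2 * v2\<bar> \<le> X^((((1+1)+0)+1))" by (intro pb qq P w X0)
    have a4: "\<bar>P1 * (q2 * u2)\<bar> \<le> X^(0+(1+1))" by (intro pb qq P w X0)
    have a5: "\<bar>P1 * (w2 * q2 * v2^2)\<bar> \<le> X^(0+((1+1)+(1+1)))" by (intro pb qq P w X0 s2)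
    have a6: "\<bar>q3 * (w1 * v1 * r)\<bar> \<le> X^(1+((1+1)+3))" by (intro pb qq r w X0)
    have a7: "\<bar>q3 * r1\<bar> \<le> X^(1+4)" by (intro pb qq r X0)
    have b1: "X^((1+1)+0) \<le> X^8" "X^(((1+1)+(1+1))+0) \<le> X^8" "X^((((1+1)+0)+1)) \<le> X^8"
       "X^(0+(1+1)) \<le> X^8" "X^(0+((1+1)+(1+1))) \<le> X^8" "X^(1+((1+1)+3)) \<le> X^8" "X^(1+4) \<le> X^8"
      by (rule pw[OF X]; simp)+
    have "\<bar>(q1 * u1 - w1 * q1 * v1^2) * P2 + 2 * q1 * v1 * p2 * v2 + P1 * (q2 * u2 - w2 * q2 * v2^2)
             + q3 * (w1 * v1 * r - r1)\<bar> \<le> \<bar>q1 * u1 * P2\<bar> + \<bar>w1 * q1 * v1^2 * P2\<bar> + 2 * \<bar>q1 * v1 * p2 * v2\<bar>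
         + \<bar>P1 * (q2 * u2)\<bar> + \<bar>P1 * (w2 * q2 * v2^2)\<bar> + \<bar>q3 * (w1 * v1 * r)\<bar> + \<bar>q3 * r1\<bar>"
    proof -
      have "(q1 * u1 - w1 * q1 * v1^2) * P2 + 2 * q1 * v1 * p2 * v2 + P1 * (q2 * u2 - w2 * q2 * v2^2)
             + q3 * (w1 * v1 * r - r1) = q1 * u1 * P2 - w1 * q1 * v1^2 * P2 + 2 * (q1 * v1 * p2 * v2)
          + (P1 * (q2 * u2) - P1 * (w2 * q2 * v2^2)) + (q3 * (w1 * v1 * r) - q3 * r1)"
        by (simp add: algebra_simps)
      then show ?thesis using abs7 by metis
    qed
    then show ?thesis using a1 a2 a3 a4 a5 a6 a7 b1 by linarith
  qed
  have N1sq: "(q1 * v1 * P2 + P1 * q2 * v2 - q3 * r)^2 \<le> 9 * X^8"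
  proof -
    have "(q1 * v1 * P2 + P1 * q2 * v2 - q3 * r)^2 = \<bar>q1 * v1 * P2 + P1 * q2 * v2 - q3 * r\<bar>^2" by simp
    also have "\<dots> \<le> (3 * X^4)^2" by (rule power_mono[OF N1]) simp
    also have "\<dots> = 9 * X^8" by (simp add: power_mult_distrib power_mult[symmetric])
    finally show ?thesis .
  qed
  show "\<bar>- (B1 * (p1 * u1 - w1 * p1 * v1^2) + B2 * (p2 * u2 - w2 * p2 * v2^2))
          + ((p1 * u1 - w1 * p1 * v1^2) * P2 + 2 * p1 * v1 * p2 * v2 + P1 * (p2 * u2 - w2 * p2 * v2^2)
             + y2 * p1 * (w1 * v1 * r - r1)) / N
          - ((p1 * v1 * P2 + P1 * p2 * v2 - y2 * p1 * r) / N)^2\<bar> \<le> 30 * X^8"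
    unfolding e1 e2 using V2 N2 N1sq abs3[of "B1 * (p1 * u1 - w1 * p1 * v1^2) + B2 * (p2 * u2 - w2 * p2 * v2^2)"
      "(q1 * u1 - w1 * q1 * v1^2) * P2 + 2 * q1 * v1 * p2 * v2 + P1 * (q2 * u2 - w2 * q2 * v2^2) + q3 * (w1 * v1 * r - r1)"
      "(q1 * v1 * P2 + P1 * q2 * v2 - q3 * r)^2"] by simp
qed


lemma atom_w:
  assumes a0: "0 < a0" "a0 \<le> A" "A \<le> a1" and c: "\<bar>c\<bar> \<le> T" and T: "1 \<le> T"
  shows "\<bar>wq c A\<bar> \<le> (1 + 1/a0 + a1 + 1/a0^2 + 2/a0^3) * T"
    and "\<bar>wq1 c A\<bar> \<le> (1 + 1/a0 + a1 + 1/a0^2 + 2/a0^3) * T"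
    and "\<bar>wq2 c A\<bar> \<le> (1 + 1/a0 + a1 + 1/a0^2 + 2/a0^3) * T"
proof -
  have A0: "0 < A" using a0 by simp
  have i1: "1/A \<le> 1/a0" using a0 by (simp add: frac_le)
  have i2: "1/A^2 \<le> 1/a0^2" using a0 by (simp add: frac_le power_mono)
  have i3: "1/A^3 \<le> 1/a0^3" using a0 by (simp add: frac_le power_mono)
  have p1: "0 \<le> 1/a0" "0 \<le> 1/a0^2" "0 \<le> 1/a0^3" "0 \<le> a1" using a0 by auto
  have ex: "(1 + 1/a0 + a1 + 1/a0^2 + 2/a0^3) * T = T + (1/a0) * T + a1 * T + (1/a0^2) * T + 2 * ((1/a0^3) * T)"
    by (simp add: algebra_simps)
  have nn: "0 \<le> (1/a0) * T" "0 \<le> a1 * T" "0 \<le> (1/a0^2) * T" "0 \<le> (1/a0^3) * T"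
    using p1 T by auto
  have a1T: "a1 \<le> a1 * T" using mult_left_mono[OF T p1(4)] by simp
  have m1: "\<bar>c\<bar> * (1/A) \<le> (1/a0) * T" using mult_mono[OF c i1] T A0 by (simp add: mult.commute)
  have m2: "\<bar>c\<bar> * (1/A^2) \<le> (1/a0^2) * T" using mult_mono[OF c i2] T A0 by (simp add: mult.commute)
  have m3: "\<bar>c\<bar> * (1/A^3) \<le> (1/a0^3) * T" using mult_mono[OF c i3] T A0 by (simp add: mult.commute)
  have e1: "\<bar>c / A\<bar> = \<bar>c\<bar> * (1/A)" using A0 by (simp add: abs_divide)
  have e2: "\<bar>A / 2\<bar> = A / 2" using A0 by simp
  have "\<bar>wq c A\<bar> \<le> \<bar>c\<bar> * (1/A) + A/2" 
    unfolding wq_def using abs_triangle_ineq[of "c/A" "A/2"] e1 e2 by linarith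
  then show "\<bar>wq c A\<bar> \<le> (1 + 1/a0 + a1 + 1/a0^2 + 2/a0^3) * T"
    unfolding ex using m1 nn a1T a0 T by linarith
  have e3: "\<bar>- c / A^2\<bar> = \<bar>c\<bar> * (1/A^2)" using A0 by (simp add: abs_divide)
  have "\<bar>wq1 c A\<bar> \<le> \<bar>c\<bar> * (1/A^2) + 1/2"
    unfolding wq1_def using abs_triangle_ineq[of "- c/A^2" "1/2"] e3 by simp
  then show "\<bar>wq1 c A\<bar> \<le> (1 + 1/a0 + a1 + 1/a0^2 + 2/a0^3) * T"
    unfolding ex using m2 nn a1T T by linarith
  have "\<bar>wq2 c A\<bar> = 2 * (\<bar>c\<bar> * (1/A^3))" unfolding wq2_def using A0
    by (simp add: abs_mult abs_divide)
  then show "\<bar>wq2 c A\<bar> \<le> (1 + 1/a0 + a1 + 1/a0^2 + 2/a0^3) * T"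
    unfolding ex using m3 nn a1T T by linarith
qed

lemma abs4': "\<bar>x1 + x2 - x3 - 2 * x4\<bar> \<le> \<bar>x1\<bar> + \<bar>x2\<bar> + \<bar>x3\<bar> + 2 * \<bar>x4\<bar>" for x1 x2 x3 x4 :: real
  by arith

lemma rr_bound:
  assumes X: "1 \<le> X" and A: "0 < A"
    and w: "\<bar>wq z A\<bar> \<le> X^1" "\<bar>wq1 z A\<bar> \<le> X^1" "\<bar>wq2 z A\<bar> \<le> X^1" "\<bar>1/A\<bar> \<le> X^1"
  shows "\<bar>rr z A\<bar> \<le> 2 * X^3" and "\<bar>rr1 z A\<bar> \<le> 5 * X^4"
proof -
  have X0: "0 \<le> X" using X by simp
  have e: "rr z A = wq z A * wq1 z A * (1/A) + (1/A) * (1/A)"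
    unfolding rr_def using A by (simp add: field_simps power2_eq_square)
  have t1: "\<bar>wq z A * wq1 z A * (1/A)\<bar> \<le> X^3" using pb[OF pb[OF w(1) w(2) X0] w(4) X0] by (simp add: power3_eq_cube mult.assoc)
  have t2: "\<bar>(1/A) * (1/A)\<bar> \<le> X^(1+1)" by (intro pb w X0)
  have "X^(1+1) \<le> X^3" by (rule pw[OF X]) simp
  then show "\<bar>rr z A\<bar> \<le> 2 * X^3" unfolding e using t1 t2 abs_triangle_ineq[of "wq z A * wq1 z A * (1/A)" "(1/A) * (1/A)"]
    by linarith
  have e1: "rr1 z A = wq1 z A * wq1 z A * (1/A) + wq z A * wq2 z A * (1/A) - wq z A * wq1 z A * ((1/A) * (1/A))
      - 2 * ((1/A) * (1/A) * (1/A))"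
    unfolding rr1_def using A by (simp add: field_simps power2_eq_square power3_eq_cube)
  have s1: "\<bar>wq1 z A * wq1 z A * (1/A)\<bar> \<le> X^((1+1)+1)" by (intro pb w X0)
  have s2: "\<bar>wq z A * wq2 z A * (1/A)\<bar> \<le> X^((1+1)+1)" by (intro pb w X0)
  have s3: "\<bar>wq z A * wq1 z A * ((1/A) * (1/A))\<bar> \<le> X^((1+1)+(1+1))" by (intro pb w X0)
  have s4: "\<bar>(1/A) * (1/A) * (1/A)\<bar> \<le> X^((1+1)+1)" by (intro pb w X0)
  have "X^((1+1)+1) \<le> X^4" by (rule pw[OF X]) simp
  moreover have "X^((1+1)+(1+1)) = X^4" by (rule arg_cong[where f="\<lambda>n. X^n"]) simp
  moreover have "\<bar>wq1 z A * wq1 z A * (1/A) + wq z A * wq2 z A * (1/A) - wq z A * wq1 z A * ((1/A) * (1/A))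
      - 2 * ((1/A) * (1/A) * (1/A))\<bar> \<le> \<bar>wq1 z A * wq1 z A * (1/A)\<bar> + \<bar>wq z A * wq2 z A * (1/A)\<bar>
      + \<bar>wq z A * wq1 z A * ((1/A) * (1/A))\<bar> + 2 * \<bar>(1/A) * (1/A) * (1/A)\<bar>"
    by (rule abs4')
  ultimately show "\<bar>rr1 z A\<bar> \<le> 5 * X^4" unfolding e1 using s1 s2 s3 s4 by linarith
qed

lemma phi_le1: "phi x \<le> 1"
proof -
  have "phi x \<le> 1 / sqrt (2 * pi) * 1" unfolding std_normal_density_def
    by (intro mult_left_mono) auto
  also have "1 / sqrt (2 * pi) \<le> 1" using pi_gt3 by (simp add: real_le_rsqrt)
  finally show ?thesis by simp
qed

lemma LGA_bound:
  fixes a b A a0 a1 :: real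
  assumes a0: "0 < a0" "a0 \<le> A" "A \<le> a1" and ab: "0 < a" "0 < b"
    and pid: "phi (wq z A) * b = phi (wq (-z) A) * a"
    and X: "X = 2 * (1 + 1/a0 + a1 + 1/a0^2 + 2/a0^3) * (1 + \<bar>z\<bar> + 1/a + 1/b)"
  shows "\<bar>LGA1 (1/a) (1/b) b z A\<bar> \<le> 5 * X^4" and "\<bar>LGA2 (1/a) (1/b) b z A\<bar> \<le> 30 * X^8"
proof -
  define M where "M = 1 + 1/a0 + a1 + 1/a0^2 + 2/a0^3"
  define T where "T = 1 + \<bar>z\<bar> + 1/a + 1/b"
  define Y where "Y = M * T"
  have A0: "0 < A" using a0 by simp
  have T1: "1 \<le> T" using ab by (simp add: T_def)
  have M1: "1 \<le> M" using a0 by (simp add: M_def)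
  have MT: "T \<le> Y" using mult_right_mono[OF M1] T1 by (simp add: Y_def)
  have Y1: "1 \<le> Y" using MT T1 by simp
  have XY: "X = 2 * Y" by (simp add: X Y_def M_def T_def)
  have YX: "Y \<le> X" using XY Y1 by simp
  have X1: "1 \<le> X" using YX Y1 by simp
  have zT: "\<bar>z\<bar> \<le> T" "\<bar>-z\<bar> \<le> T" using ab by (auto simp: T_def)
  note aw = atom_w[OF a0 zT(1) T1, folded M_def, folded Y_def] atom_w[OF a0 zT(2) T1, folded M_def, folded Y_def]
  have iA: "\<bar>1/A\<bar> \<le> Y"
  proof -
    have "\<bar>1/A\<bar> \<le> 1/a0" using a0 by (simp add: frac_le)
    also have "\<dots> \<le> M" by (simp add: M_def) (use a0 in auto)
    also have "M \<le> Y" using mult_left_mono[OF T1, of M] M1 by (simp add: Y_def)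
    finally show ?thesis .
  qed
  have a1Y: "a1 \<le> Y"
  proof -
    have "a1 \<le> M" by (simp add: M_def) (use a0 in auto)
    also have "M \<le> Y" using mult_left_mono[OF T1, of M] M1 by (simp add: Y_def)
    finally show ?thesis .
  qed
  have rrb: "\<bar>rr z A\<bar> \<le> 2 * Y^3" "\<bar>rr1 z A\<bar> \<le> 5 * Y^4"
    using rr_bound[OF Y1 A0] aw iA by auto
  have Y0: "0 \<le> Y" using Y1 by simp
  have r3: "\<bar>rr z A\<bar> \<le> X^3" using rrb(1) XY Y0 by (simp add: power_mult_distrib)
  have r4: "\<bar>rr1 z A\<bar> \<le> X^4" using rrb(2) XY Y0 by (simp add: power_mult_distrib)
  define N where "N = NA b z A"
  have N0: "0 < N" unfolding N_def by (rule NA_pos[OF A0]) (use ab in simp)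
  have Nge: "b * phi (wq z A) \<le> A * N"
    using A0 ab by (simp add: N_def NA_def field_simps Phi_nonneg)
  have p1n: "0 \<le> phi (wq z A)" "0 \<le> phi (wq (-z) A)" by simp_all
  have q1: "\<bar>phi (wq z A) / N\<bar> \<le> X^1"
  proof -
    have "phi (wq z A) / N \<le> A * (1/b)" using Nge N0 ab by (simp add: field_simps)
    also have "\<dots> \<le> a1 * T" by (intro mult_mono) (use a0 ab in \<open>auto simp: T_def\<close>)
    also have "\<dots> \<le> M * T" by (intro mult_right_mono) (use a0 T1 in \<open>auto simp: M_def\<close>)
    finally show ?thesis using YX p1n N0 by (simp add: Y_def)
  qed
  have q2: "\<bar>phi (wq (-z) A) / N\<bar> \<le> X^1"
  proof -
    have "a * phi (wq (-z) A) \<le> A * N" using Nge pid by (simp add: mult.commute)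
    then have "phi (wq (-z) A) / N \<le> A * (1/a)" using N0 ab by (simp add: field_simps)
    also have "\<dots> \<le> a1 * T" by (intro mult_mono) (use a0 ab in \<open>auto simp: T_def\<close>)
    also have "\<dots> \<le> M * T" by (intro mult_right_mono) (use a0 T1 in \<open>auto simp: M_def\<close>)
    finally show ?thesis using YX p1n N0 by (simp add: Y_def)
  qed
  have q3: "\<bar>b * phi (wq z A) / N\<bar> \<le> X^1"
  proof -
    have "b * phi (wq z A) / N \<le> A" using Nge N0 by (simp add: field_simps)
    then show ?thesis using a0 a1Y YX p1n N0 ab by simp
  qed
  have ab': "0 < 1/a" "0 < 1/b" using ab by auto
  have "1/a \<le> X" "1/b \<le> X" using MT YX ab' abs_ge_zero[of z] unfolding T_def by linarith+
  then have B: "\<bar>1/a\<bar> \<le> X^1" "\<bar>1/b\<bar> \<le> X^1" using ab' by auto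
  have P: "\<bar>Phi (wq z A)\<bar> \<le> X^0" "\<bar>Phi (wq (-z) A)\<bar> \<le> X^0" "\<bar>phi (wq z A)\<bar> \<le> X^0" "\<bar>phi (wq (-z) A)\<bar> \<le> X^0"
    by (simp_all add: Phi_nonneg Phi_le1 phi_le1)
  have W: "\<bar>wq z A\<bar> \<le> X^1" "\<bar>wq1 z A\<bar> \<le> X^1" "\<bar>wq2 z A\<bar> \<le> X^1"
     "\<bar>wq (-z) A\<bar> \<le> X^1" "\<bar>wq1 (-z) A\<bar> \<le> X^1" "\<bar>wq2 (-z) A\<bar> \<le> X^1"
    using aw YX by auto
  note cb = core_bound[OF X1 W r3 r4 P N0 q1 q2 q3 B]
  show "\<bar>LGA1 (1/a) (1/b) b z A\<bar> \<le> 5 * X^4"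
    using cb(1) unfolding LGA1_def VA1_def NA1_def N_def .
  show "\<bar>LGA2 (1/a) (1/b) b z A\<bar> \<le> 30 * X^8"
    using cb(2) unfolding LGA2_def VA2_def NA2_def NA1_def N_def .
qed

lemma pid_wq:
  assumes D0: "0 < D" and ab: "0 < a" "0 < b"
  shows "phi (wq (ln (b/a)) (sqrt (2*D))) * b = phi (wq (- ln (b/a)) (sqrt (2*D))) * a"
proof -
  have le: "0 \<le> D" using D0 by simp
  have w1: "W D a b = wq (ln (b/a)) (sqrt (2*D))" by (simp only: W_wq[OF le])
  have w2: "W D b a = wq (- ln (b/a)) (sqrt (2*D))" by (simp only: W_wq[OF le] ln_swap[OF ab])
  show ?thesis using phi_ident[OF D0 ab] unfolding w1 w2 .
qed

definition MM :: "real \<Rightarrow> real \<Rightarrow> real" where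
  "MM D0 D1 = 1 + 1/sqrt (2*D0) + sqrt (2*D1) + 1/sqrt (2*D0)^2 + 2/sqrt (2*D0)^3"

definition XX :: "real \<Rightarrow> real \<Rightarrow> real \<Rightarrow> real \<Rightarrow> real" where
  "XX D0 D1 a b = 2 * MM D0 D1 * (1 + \<bar>ln (b/a)\<bar> + 1/a + 1/b)"

lemma XX_ge1: "0 < D0 \<Longrightarrow> D0 \<le> D1 \<Longrightarrow> 0 < a \<Longrightarrow> 0 < b \<Longrightarrow> 1 \<le> XX D0 D1 a b"
proof -
  assume a: "0 < D0" "D0 \<le> D1" "0 < a" "0 < b"
  have sp: "0 < sqrt (2*D0)" using a by simp
  have "0 \<le> 1/sqrt (2*D0)" "0 \<le> sqrt (2*D1)" "0 \<le> 1/sqrt (2*D0)^2" "0 \<le> 2/sqrt (2*D0)^3"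
    using sp a by auto
  then have "1 \<le> MM D0 D1" unfolding MM_def by linarith
  moreover have "1 \<le> 1 + \<bar>ln (b/a)\<bar> + 1/a + 1/b" using a by simp
  ultimately have "1 * 1 \<le> MM D0 D1 * (1 + \<bar>ln (b/a)\<bar> + 1/a + 1/b)" by (intro mult_mono) auto
  then show ?thesis by (simp add: XX_def)
qed

lemma LGD_bound:
  assumes D: "0 < D0" "D0 \<le> D" "D \<le> D1" and ab: "0 < a" "0 < b"
  shows "\<bar>LGD1 (1/a) (1/b) b (ln (b/a)) D\<bar> \<le> (5 / sqrt (2*D0)) * XX D0 D1 a b ^ 8"
    and "\<bar>LGD2 (1/a) (1/b) b (ln (b/a)) D\<bar> \<le> ((30 + 5 / sqrt (2*D0)) / (2*D0)) * XX D0 D1 a b ^ 8"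
proof -
  define A where "A = sqrt (2*D)"
  define a0 where "a0 = sqrt (2*D0)"
  define X where "X = XX D0 D1 a b"
  have a0p: "0 < a0" using D by (simp add: a0_def)
  have Aa: "a0 \<le> A" "A \<le> sqrt (2*D1)" using D by (auto simp: A_def a0_def)
  have A0: "0 < A" using a0p Aa by simp
  have X1: "1 \<le> X" unfolding X_def by (rule XX_ge1) (use D ab in auto)
  have Xd: "X = 2 * (1 + 1/a0 + sqrt (2*D1) + 1/a0^2 + 2/a0^3) * (1 + \<bar>ln (b/a)\<bar> + 1/a + 1/b)"
    by (simp add: X_def XX_def MM_def a0_def)
  have Dp: "0 < D" using D by simp
  note lb = LGA_bound[OF a0p Aa ab pid_wq[OF Dp ab, folded A_def] Xd]
  have lb1: "\<bar>LGA1 (1/a) (1/b) b (ln (b/a)) A\<bar> \<le> 5 * X^8"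
    using lb(1) pw[OF X1, of 4 8] D by simp
  have iA: "1/A \<le> 1/a0" using a0p Aa by (simp add: frac_le)
  have "\<bar>LGD1 (1/a) (1/b) b (ln (b/a)) D\<bar> = \<bar>LGA1 (1/a) (1/b) b (ln (b/a)) A\<bar> * (1/A)"
    unfolding LGD1_def A_def[symmetric] using A0 by (simp add: abs_divide)
  also have "\<dots> \<le> (5 * X^8) * (1/a0)" by (intro mult_mono lb1 iA) (use A0 in auto)
  finally show "\<bar>LGD1 (1/a) (1/b) b (ln (b/a)) D\<bar> \<le> (5 / sqrt (2*D0)) * XX D0 D1 a b ^ 8"
    by (simp add: a0_def X_def)
  have t: "\<bar>LGA2 (1/a) (1/b) b (ln (b/a)) A - LGA1 (1/a) (1/b) b (ln (b/a)) A / A\<bar> \<le> (30 + 5/a0) * X^8"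
  proof -
    have "\<bar>LGA1 (1/a) (1/b) b (ln (b/a)) A / A\<bar> = \<bar>LGA1 (1/a) (1/b) b (ln (b/a)) A\<bar> * (1/A)"
      using A0 by (simp add: abs_divide)
    also have "\<dots> \<le> (5 * X^8) * (1/a0)" by (intro mult_mono lb1 iA) (use A0 in auto)
    finally have "\<bar>LGA1 (1/a) (1/b) b (ln (b/a)) A / A\<bar> \<le> (5/a0) * X^8" by simp
    then show ?thesis using lb(2) abs_triangle_ineq4[of "LGA2 (1/a) (1/b) b (ln (b/a)) A" "LGA1 (1/a) (1/b) b (ln (b/a)) A / A"]
      by (simp add: distrib_right)
  qed
  have "\<bar>LGD2 (1/a) (1/b) b (ln (b/a)) D\<bar>
      = \<bar>LGA2 (1/a) (1/b) b (ln (b/a)) A - LGA1 (1/a) (1/b) b (ln (b/a)) A / A\<bar> * (1 / (2*D))"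
    unfolding LGD2_def A_def[symmetric] using D by (simp add: abs_divide)
  also have "\<dots> \<le> ((30 + 5/a0) * X^8) * (1 / (2*D0))"
    by (intro mult_mono t) (use D a0p in \<open>auto simp: frac_le\<close>)
  finally show "\<bar>LGD2 (1/a) (1/b) b (ln (b/a)) D\<bar> \<le> ((30 + 5 / sqrt (2*D0)) / (2*D0)) * XX D0 D1 a b ^ 8"
    by (simp add: a0_def X_def)
qed


lemma powr_up: assumes "0 \<le> (x::real)" "0 < e" "e \<le> 2" shows "x powr e \<le> 1 + x^2"
proof (cases "x \<le> 1")
  case True
  then have "x powr e \<le> 1" using assms by (intro powr_le1) auto
  then show ?thesis by (smt (verit) zero_le_power2)
next
  case False
  then have "x powr e \<le> x powr 2" using assms by (intro powr_mono) auto
  also have "x powr 2 = x^2" using False by (simp add: powr_numeral)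
  finally show ?thesis by simp
qed

lemma powr_low: assumes "0 < (x::real)" "0 < e" "e \<le> 2" shows "min 1 (x^2) \<le> x powr e"
proof (cases "x \<le> 1")
  case True
  have "x powr 2 \<le> x powr e" using assms True by (intro powr_mono') auto
  moreover have "x powr 2 = x^2" using assms by (simp add: powr_numeral)
  ultimately show ?thesis by simp
next
  case False
  then have "1 \<le> x powr e" using assms by (intro ge_one_powr_ge_zero) auto
  then show ?thesis by simp
qed

definition Bk :: "real \<Rightarrow> real \<Rightarrow> real" where
  "Bk R v = (1 + R) * (1 + \<bar>ln v\<bar>)^2 * (1 + v^2)"

lemma dd_bound:
  assumes adm: "\<theta> \<in> admissible" and R: "\<And>k. \<bar>\<theta> $ k\<bar> \<le> R"
  shows "\<bar>dd h u i \<theta>\<bar> \<le> Bk R \<bar>vv h u (snd i)\<bar>" and "\<bar>dd2 h u i j \<theta>\<bar> \<le> Bk R \<bar>vv h u (snd i)\<bar>"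
proof -
  define v where "v = \<bar>vv h u (snd i)\<bar>"
  define e where "e = \<theta> $ (True, snd i)"
  define C where "C = \<theta> $ (False, snd i)"
  have e: "0 < e" "e \<le> 2" using adm by (auto simp: admissible_def e_def)
  have C: "0 < C" "C \<le> R" using adm R[of "(False, snd i)"] by (auto simp: admissible_def C_def)
  have v0: "0 \<le> v" by (simp add: v_def)
  have pe: "v powr e \<le> 1 + v^2" "0 \<le> v powr e" using powr_up[OF v0 e] by auto
  define L where "L = (1 + \<bar>ln v\<bar>)^2"
  have L: "1 \<le> L" "\<bar>ln v\<bar> \<le> L" "\<bar>ln v\<bar> * \<bar>ln v\<bar> \<le> L" unfolding L_def
    by (auto simp: power2_eq_square algebra_simps)
  have R1: "1 \<le> 1 + R" "R \<le> 1 + R" "0 \<le> R" using C by auto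
  have q0: "0 \<le> 1 + v^2" by simp
  have Bk_eq: "Bk R v = (1 + R) * L * (1 + v^2)" by (simp add: Bk_def L_def)
  have b1: "1 * 1 * (1 + v^2) \<le> Bk R v" unfolding Bk_eq
    by (intro mult_right_mono mult_mono L R1 q0) (use L R1 in auto)
  have b2: "R * \<bar>ln v\<bar> * (1 + v^2) \<le> Bk R v" unfolding Bk_eq
    by (intro mult_right_mono mult_mono L R1 q0) (use L R1 in auto)
  have b3: "1 * \<bar>ln v\<bar> * (1 + v^2) \<le> Bk R v" unfolding Bk_eq
    by (intro mult_right_mono mult_mono L R1 q0) (use L R1 in auto)
  have b4: "R * (\<bar>ln v\<bar> * \<bar>ln v\<bar>) * (1 + v^2) \<le> Bk R v" unfolding Bk_eq
    by (intro mult_right_mono mult_mono L R1 q0) (use L R1 in auto)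
  have t1: "\<bar>C * (ln v * v powr e)\<bar> \<le> R * \<bar>ln v\<bar> * (1 + v^2)"
    using C pe by (simp add: abs_mult mult.assoc) (intro mult_mono; simp)
  have t2: "\<bar>ln v * v powr e\<bar> \<le> 1 * \<bar>ln v\<bar> * (1 + v^2)"
    using pe by (simp add: abs_mult) (intro mult_left_mono; simp)
  have t3: "\<bar>C * (ln v * (ln v * v powr e))\<bar> \<le> R * (\<bar>ln v\<bar> * \<bar>ln v\<bar>) * (1 + v^2)"
  proof -
    have eq: "\<bar>C * (ln v * (ln v * v powr e))\<bar> = C * ((\<bar>ln v\<bar> * \<bar>ln v\<bar>) * v powr e)"
      using C(1) pe(2) by (simp add: abs_mult)
    have "C * ((\<bar>ln v\<bar> * \<bar>ln v\<bar>) * v powr e) \<le> R * ((\<bar>ln v\<bar> * \<bar>ln v\<bar>) * (1 + v^2))"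
      by (intro mult_mono mult_left_mono pe) (use C in auto)
    then show ?thesis unfolding eq by (simp only: mult.assoc)
  qed
  have t4: "\<bar>v powr e\<bar> \<le> 1 * 1 * (1 + v^2)" using pe by simp
  have dd_eq: "dd h u i \<theta> = (if fst i then C * (ln v * v powr e) else v powr e)"
    by (cases i) (simp add: dd_def v_def e_def C_def)
  have dd2_eq: "dd2 h u i j \<theta> = (if snd i = snd j then (if fst i \<and> fst j then C * (ln v * (ln v * v powr e))
       else if fst i \<or> fst j then ln v * v powr e else 0) else 0)"
    by (simp add: dd2_def v_def e_def C_def)
  have B0: "0 \<le> Bk R v" by (rule order_trans[OF _ b1]) simp
  show "\<bar>dd h u i \<theta>\<bar> \<le> Bk R \<bar>vv h u (snd i)\<bar>"
  proof (cases "fst i")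
    case True then show ?thesis unfolding v_def[symmetric] dd_eq using t1 b2 by simp
  next
    case False then show ?thesis unfolding v_def[symmetric] dd_eq using t4 b1 by simp
  qed
  show "\<bar>dd2 h u i j \<theta>\<bar> \<le> Bk R \<bar>vv h u (snd i)\<bar>"
    unfolding v_def[symmetric] dd2_eq using t3 b4 t2 b3 B0 by (simp split: if_split)
qed

lemma Bk_nonneg: "0 \<le> R \<Longrightarrow> 0 \<le> Bk R v"
  by (simp add: Bk_def)

lemma unif:
  fixes \<Theta> :: "'d::finite par set"
  assumes "compact \<Theta>" "\<Theta> \<subseteq> admissible" "\<Theta> \<noteq> {}" "(h, u) \<noteq> (0, 0)"
  shows "\<exists>D0 D1 Kd. 0 < D0 \<and> D0 \<le> D1 \<and> (\<forall>\<theta>\<in>\<Theta>. D0 \<le> delta \<theta> h u \<and> delta \<theta> h u \<le> D1 \<and>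
      (\<forall>i. \<bar>dd h u i \<theta>\<bar> \<le> Kd) \<and> (\<forall>i j. \<bar>dd2 h u i j \<theta>\<bar> \<le> Kd))"
proof -
  obtain R0 where R0: "\<And>\<theta>. \<theta> \<in> \<Theta> \<Longrightarrow> norm \<theta> \<le> R0"
    using compact_imp_bounded[OF assms(1)] unfolding bounded_iff by blast
  have R: "\<bar>\<theta> $ k\<bar> \<le> R0" if "\<theta> \<in> \<Theta>" for \<theta> k
    using component_le_norm_cart[of \<theta> k] R0[OF that] by simp
  have adm: "\<theta> \<in> admissible" if "\<theta> \<in> \<Theta>" for \<theta> using assms(2) that by auto
  obtain \<theta>0 where \<theta>0: "\<theta>0 \<in> \<Theta>" using assms(3) by auto
  have R00: "0 \<le> R0" using R[OF \<theta>0, of "(False, None)"] by simp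
  obtain k0 where k0: "vv h u k0 \<noteq> 0"
  proof (cases "u = 0")
    case True
    then have "h \<noteq> 0" using assms(4) by simp
    then obtain j where "h $ j \<noteq> 0" by (auto simp: vec_eq_iff)
    then show ?thesis using that[of "Some j"] by (simp add: vv_def)
  next
    case False
    then show ?thesis using that[of None] by (simp add: vv_def)
  qed
  define v0 where "v0 = \<bar>vv h u k0\<bar>"
  have v0: "0 < v0" using k0 by (simp add: v0_def)
  have "continuous_on \<Theta> (\<lambda>\<theta>. \<theta> $ (False, k0))" by (intro continuous_intros)
  then obtain \<theta>m where \<theta>m: "\<theta>m \<in> \<Theta>" "\<And>\<theta>. \<theta> \<in> \<Theta> \<Longrightarrow> \<theta>m $ (False, k0) \<le> \<theta> $ (False, k0)"
    using continuous_attains_inf[OF assms(1,3)] by blast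
  define cm where "cm = \<theta>m $ (False, k0)"
  have cm: "0 < cm" using adm[OF \<theta>m(1)] by (simp add: cm_def admissible_def)
  define D0 where "D0 = cm * min 1 (v0^2)"
  define D1 where "D1 = (\<Sum>k\<in>UNIV. R0 * (1 + \<bar>vv h u k\<bar>^2))"
  define Kd where "Kd = (\<Sum>k\<in>UNIV. Bk R0 \<bar>vv h u k\<bar>)"
  have D0p: "0 < D0" using cm v0 by (simp add: D0_def)
  have low: "D0 \<le> delta \<theta> h u" if "\<theta> \<in> \<Theta>" for \<theta>
  proof -
    have tnn: "0 \<le> \<theta> $ (False, k) * \<bar>vv h u k\<bar> powr \<theta> $ (True, k)" for k
    proof -
      have "0 < \<theta> $ (False, k)" using adm[OF that] unfolding admissible_def by blast
      then show ?thesis by (intro mult_nonneg_nonneg) auto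
    qed
    have ck: "0 < \<theta> $ (False, k0)" "0 < \<theta> $ (True, k0)" "\<theta> $ (True, k0) \<le> 2"
      using adm[OF that] unfolding admissible_def by blast+
    have "D0 \<le> \<theta> $ (False, k0) * \<bar>vv h u k0\<bar> powr \<theta> $ (True, k0)"
      unfolding D0_def v0_def[symmetric]
      by (intro mult_mono powr_low v0) (use \<theta>m(2)[OF that] ck in \<open>auto simp: cm_def\<close>)
    also have "\<dots> \<le> delta \<theta> h u" unfolding delta_alt
      by (rule member_le_sum) (use tnn in auto)
    finally show ?thesis .
  qed
  have up: "delta \<theta> h u \<le> D1" if "\<theta> \<in> \<Theta>" for \<theta>
    unfolding delta_alt D1_def
  proof (rule sum_mono)
    fix k
    have "\<bar>vv h u k\<bar> powr \<theta> $ (True, k) \<le> 1 + \<bar>vv h u k\<bar>^2"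
      using adm[OF that] by (intro powr_up) (auto simp: admissible_def)
    then show "\<theta> $ (False, k) * \<bar>vv h u k\<bar> powr \<theta> $ (True, k) \<le> R0 * (1 + \<bar>vv h u k\<bar>^2)"
      using R[OF that, of "(False, k)"] adm[OF that]
      by (intro mult_mono) (auto simp: admissible_def)
  qed
  have kd: "\<bar>dd h u i \<theta>\<bar> \<le> Kd \<and> \<bar>dd2 h u i j \<theta>\<bar> \<le> Kd" if "\<theta> \<in> \<Theta>" for \<theta> i j
  proof -
    have "Bk R0 \<bar>vv h u (snd i)\<bar> \<le> Kd" unfolding Kd_def
      by (rule member_le_sum) (auto intro: Bk_nonneg R00)
    then show ?thesis using dd_bound(1)[OF adm[OF that] R[OF that], of h u i]
       dd_bound(2)[OF adm[OF that] R[OF that], of h u i j] by auto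
  qed
  have "D0 \<le> D1" using low[OF \<theta>0] up[OF \<theta>0] by simp
  then show ?thesis using D0p low up kd by blast
qed


lemma dyadic_k: assumes "1 \<le> (z::real)" shows "\<exists>k::nat. 2^k \<le> z \<and> z < 2^(k+1)"
proof -
  define l where "l = log 2 z"
  have l0: "0 \<le> l" using assms by (simp add: l_def)
  define k where "k = nat \<lfloor>l\<rfloor>"
  have kf: "real k = of_int \<lfloor>l\<rfloor>" using l0 by (simp add: k_def)
  have zl: "z = 2 powr l" using assms by (simp add: l_def)
  have "(2::real)^k = 2 powr (real k)" by (simp add: powr_realpow)
  also have "\<dots> \<le> 2 powr l" using kf by (intro powr_mono) auto
  finally have a: "2^k \<le> z" using zl by simp
  have "2 powr l < 2 powr (real k + 1)" using kf by (intro powr_less_mono) linarith+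
  also have "2 powr (real k + 1) = (2::real)^(k+1)" by (simp add: powr_add powr_realpow)
  finally show ?thesis using a zl by auto
qed

lemma dyadic:
  assumes "prob_space M" and Zm: "Z \<in> borel_measurable M" and Z0: "\<And>\<omega>. \<omega> \<in> space M \<Longrightarrow> 0 \<le> Z \<omega>"
    and tail: "\<And>k. measure M {\<omega> \<in> space M. 2^k \<le> Z \<omega>} \<le> C * (1/4)^k"
  shows "(\<integral>\<^sup>+\<omega>. ennreal (Z \<omega>) \<partial>M) < \<infinity>"
proof -
  interpret prob_space M by fact
  define A where "A k = {\<omega> \<in> space M. 2^k \<le> Z \<omega>}" for k :: nat
  have Asets: "A k \<in> sets M" for k unfolding A_def using Zm by measurable
  have pw: "ennreal (Z \<omega>) \<le> 1 + (\<Sum>k. ennreal (2^(k+1)) * indicator (A k) \<omega>)" if "\<omega> \<in> space M" for \<omega>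
  proof (cases "Z \<omega> \<le> 1")
    case True
    then have "ennreal (Z \<omega>) \<le> 1" by (simp add: ennreal_leI)
    then show ?thesis by (rule order_trans) (rule add_increasing2; simp)
  next
    case False
    then obtain k :: nat where k: "2^k \<le> Z \<omega>" "Z \<omega> < 2^(k+1)" using dyadic_k[of "Z \<omega>"] by auto
    have "ennreal (Z \<omega>) \<le> ennreal (2^(k+1)) * indicator (A k) \<omega>"
      using k that by (auto simp: A_def intro!: ennreal_leI)
    also have "\<dots> \<le> (\<Sum>k. ennreal (2^(k+1)) * indicator (A k) \<omega>)"
    proof -
      define g where "g k = ennreal (2^(k+1)) * indicator (A k) \<omega>" for k
      have "(\<Sum>i\<in>{k}. g i) \<le> (\<Sum>i. g i)" by (rule sum_le_suminf) auto
      then show ?thesis by (simp only: sum.insert_if finite.emptyI empty_iff if_False sum.empty add_0_right g_def)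
    qed
    finally show ?thesis by (rule order_trans) (rule add_increasing; simp)
  qed
  have "(\<integral>\<^sup>+\<omega>. ennreal (Z \<omega>) \<partial>M) \<le> (\<integral>\<^sup>+\<omega>. 1 + (\<Sum>k. ennreal (2^(k+1)) * indicator (A k) \<omega>) \<partial>M)"
    by (rule nn_integral_mono) (rule pw)
  also have "\<dots> = (\<integral>\<^sup>+\<omega>. 1 \<partial>M) + (\<integral>\<^sup>+\<omega>. (\<Sum>k. ennreal (2^(k+1)) * indicator (A k) \<omega>) \<partial>M)"
    by (rule nn_integral_add) (use Asets in auto)
  also have "(\<integral>\<^sup>+\<omega>. (\<Sum>k. ennreal (2^(k+1)) * indicator (A k) \<omega>) \<partial>M)
      = (\<Sum>k. \<integral>\<^sup>+\<omega>. ennreal (2^(k+1)) * indicator (A k) \<omega> \<partial>M)"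
    by (rule nn_integral_suminf) (use Asets in auto)
  also have "\<dots> = (\<Sum>k. ennreal (2^(k+1)) * emeasure M (A k))"
    by (simp add: nn_integral_cmult_indicator Asets)
  also have "\<dots> \<le> (\<Sum>k. ennreal (2 * C * (1/2)^k))"
  proof (rule suminf_le)
    fix k
    have "emeasure M (A k) = ennreal (measure M (A k))" by (simp add: emeasure_eq_measure)
    also have "\<dots> \<le> ennreal (C * (1/4)^k)" using tail[of k] by (simp add: A_def ennreal_leI)
    finally have "ennreal (2^(k+1)) * emeasure M (A k) \<le> ennreal (2^(k+1)) * ennreal (C * (1/4)^k)"
      by (rule mult_left_mono) simp
    also have "\<dots> \<le> ennreal (2 * C * (1/2)^k)"
    proof (cases "0 \<le> C")
      case True
      have f4: "(4::real)^k = 2^k * 2^k" by (simp add: power_mult_distrib[symmetric])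
      have e: "(2::real)^(k+1) * (C * (1/4)^k) = 2 * C * (1/2)^k"
        by (simp add: power_divide f4 field_simps)
      have e2: "ennreal (2^(k+1)) * ennreal (C * (1/4)^k) = ennreal ((2::real)^(k+1) * (C * (1/4)^k))"
        by (rule ennreal_mult[symmetric]) (use True in auto)
      show ?thesis unfolding e2 e by (rule order_refl)
    next
      case False
      then have "C * (1/4)^k \<le> 0" by (simp add: mult_nonpos_nonneg)
      then show ?thesis by (simp add: ennreal_neg)
    qed
    finally show "ennreal (2^(k+1)) * emeasure M (A k) \<le> ennreal (2 * C * (1/2)^k)" .
  qed auto
  also have "\<dots> < \<infinity>"
  proof (cases "0 \<le> C")
    case True
    have su: "summable (\<lambda>k. 2 * C * (1/2::real)^k)" by (intro summable_mult summable_geometric) simp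
    have "(\<Sum>k. ennreal (2 * C * (1/2)^k)) \<noteq> top"
      by (rule ennreal_suminf_neq_top[OF su]) (use True in simp)
    then show ?thesis by (simp add: less_top[symmetric])
  next
    case False
    have "ennreal (2 * C * (1/2::real)^k) = 0" for k
      by (rule ennreal_neg) (use False in \<open>simp add: mult_nonpos_nonneg\<close>)
    then show ?thesis by simp
  qed
  finally show ?thesis by (simp add: top.not_eq_extremum)
qed


lemma xn_exp: assumes "0 \<le> x" "1 \<le> n" shows "x^n \<le> real n ^ n * exp x"
proof -
  have n0: "0 < real n" using assms by simp
  have "x / n \<le> exp (x / n)" using exp_ge_add_one_self[of "x/n"] by linarith
  then have "(x / n)^n \<le> exp (x / n) ^ n" by (intro power_mono) (use assms n0 in auto)
  also have "exp (x / n) ^ n = exp x" using n0 by (simp add: exp_of_nat_mult[symmetric])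
  finally have "(x / n)^n \<le> exp x" .
  then have "real n ^ n * (x / n)^n \<le> real n ^ n * exp x" by (intro mult_left_mono) auto
  moreover have "real n ^ n * (x / n)^n = x^n" using n0 by (simp add: power_divide)
  ultimately show ?thesis by simp
qed

definition Uf :: "real \<Rightarrow> real" where "Uf y = 1 + \<bar>ln y\<bar> + 1 / y"
definition Qf :: "real \<Rightarrow> real \<Rightarrow> real" where "Qf c y = exp (c / y) + sqrt y"

lemma Uf_bound:
  assumes y: "0 < y" and c: "0 < c" and n: "1 \<le> n"
  shows "Uf y ^ n \<le> ((2 + 2 * real n)^n + 3^n * (real n / c)^n) * Qf c y"
proof -
  have n0: "0 < real n" using n by simp
  have Q0: "0 \<le> exp (c / y)" "0 \<le> sqrt y" using y by auto
  have U0: "0 \<le> Uf y" using y by (simp add: Uf_def)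
  show ?thesis
  proof (cases "1 \<le> y")
    case True
    define w where "w = y powr (1 / (2 * n))"
    have w1: "1 \<le> w" unfolding w_def using True n0 by (intro ge_one_powr_ge_zero) auto
    have "ln y = (2 * n) * ln w" unfolding w_def using y n0 by (simp add: ln_powr)
    also have "\<dots> \<le> (2 * n) * w" using ln_le_minus_one[of w] w1 n0 by (intro mult_left_mono) auto
    finally have lnb: "ln y \<le> 2 * n * w" .
    have "1 / y \<le> 1" using True by simp
    moreover have "\<bar>ln y\<bar> = ln y" using True by simp
    ultimately have "Uf y \<le> 2 + 2 * n * w" unfolding Uf_def using lnb by linarith
    also have "\<dots> \<le> (2 + 2 * n) * w" using w1 n0 by (simp add: algebra_simps)
    finally have "Uf y ^ n \<le> ((2 + 2 * n) * w) ^ n" using U0 by (intro power_mono) auto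
    also have "\<dots> = (2 + 2 * n)^n * w^n" by (simp add: power_mult_distrib)
    also have "w^n = sqrt y"
    proof -
      have "w^n = y powr (real n * (1 / (2 * n)))" unfolding w_def using y
        by (simp add: powr_realpow[symmetric] powr_powr mult.commute)
      also have "real n * (1 / (2 * n)) = 1/2" using n0 by simp
      finally show ?thesis using y by (simp add: powr_half_sqrt)
    qed
    finally have "Uf y ^ n \<le> (2 + 2 * n)^n * sqrt y" .
    also have "\<dots> \<le> ((2 + 2 * real n)^n + 3^n * (real n / c)^n) * Qf c y"
      unfolding Qf_def using Q0 c
      by (intro mult_mono) (auto intro!: add_nonneg_nonneg)
    finally show ?thesis .
  next
    case False
    have lny: "\<bar>ln y\<bar> \<le> 1 / y"
    proof -
      have "ln y \<le> 0" using False y by simp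
      moreover have "ln (1/y) \<le> 1/y - 1" using ln_le_minus_one[of "1/y"] y by simp
      moreover have "ln (1/y) = - ln y" using y by (simp add: ln_div)
      ultimately show ?thesis by simp
    qed
    have "1 \<le> 1 / y" using False y by simp
    then have "Uf y \<le> 3 * (1 / y)" unfolding Uf_def using lny by linarith
    then have "Uf y ^ n \<le> (3 * (1/y))^n" using U0 by (intro power_mono) auto
    also have "\<dots> = 3^n * ((1/c)^n * (c / y)^n)" using c by (simp add: power_mult_distrib power_divide)
    also have "\<dots> \<le> 3^n * ((1/c)^n * (real n ^ n * exp (c / y)))"
      using xn_exp[of "c/y" n] c y n by (intro mult_left_mono) auto
    also have "\<dots> = 3^n * (real n / c)^n * exp (c / y)" by (simp add: power_divide)
    also have "\<dots> \<le> ((2 + 2 * real n)^n + 3^n * (real n / c)^n) * Qf c y"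
      unfolding Qf_def using Q0 c
      by (intro mult_mono) (auto intro!: add_nonneg_nonneg)
    finally show ?thesis .
  qed
qed

lemma sum_pow: "0 \<le> x \<Longrightarrow> 0 \<le> y \<Longrightarrow> (x + y)^n \<le> 2^n * (x^n + y^n)" for x y :: real
proof -
  assume xy: "0 \<le> x" "0 \<le> y"
  have "(x + y)^n \<le> (2 * max x y)^n" using xy by (intro power_mono) auto
  also have "\<dots> = 2^n * (max x y)^n" by (simp add: power_mult_distrib)
  also have "(max x y)^n \<le> x^n + y^n" using xy by (cases "x \<le> y") (auto simp: max_def)
  finally show ?thesis by simp
qed

lemma XX_Q:
  assumes "0 < D0" "D0 \<le> D1" "0 < a" "0 < b" "0 < c"
  shows "XX D0 D1 a b ^ 24 \<le> ((2 * MM D0 D1)^24 * 2^24 * ((2 + 2 * 24)^24 + 3^24 * (24 / c)^24))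
      * (Qf c a + Qf c b)"
proof -
  define C where "C = ((2 + 2 * 24)^24 + 3^24 * (24 / c)^24 :: real)"
  have M0: "0 \<le> MM D0 D1" using XX_ge1[OF assms(1,2,3,4)] assms
    by (smt (verit, ccfv_SIG) MM_def divide_nonneg_nonneg real_sqrt_ge_zero zero_le_power)
  have T: "1 + \<bar>ln (b/a)\<bar> + 1/a + 1/b \<le> Uf a + Uf b"
  proof -
    have "ln (b/a) = ln b - ln a" using assms by (simp add: ln_div)
    then have "\<bar>ln (b/a)\<bar> \<le> \<bar>ln a\<bar> + \<bar>ln b\<bar>" by simp
    then show ?thesis unfolding Uf_def by simp
  qed
  have T0: "0 \<le> 1 + \<bar>ln (b/a)\<bar> + 1/a + 1/b" using assms by simp
  have s1: "(Uf a + Uf b)^24 \<le> 2^24 * (C * Qf c a + C * Qf c b)"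
  proof -
    have "(Uf a + Uf b)^24 \<le> 2^24 * (Uf a ^ 24 + Uf b ^ 24)"
      by (rule sum_pow) (use assms in \<open>auto simp: Uf_def\<close>)
    also have "Uf a ^ 24 + Uf b ^ 24 \<le> C * Qf c a + C * Qf c b"
      using Uf_bound[OF assms(3,5), of 24] Uf_bound[OF assms(4,5), of 24] by (simp add: C_def)
    then have "2^24 * (Uf a ^ 24 + Uf b ^ 24) \<le> 2^24 * (C * Qf c a + C * Qf c b)" by simp
    finally show ?thesis .
  qed
  have "XX D0 D1 a b ^ 24 = (2 * MM D0 D1)^24 * (1 + \<bar>ln (b/a)\<bar> + 1/a + 1/b)^24"
    by (simp add: XX_def power_mult_distrib)
  also have "\<dots> \<le> (2 * MM D0 D1)^24 * (Uf a + Uf b)^24"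
    by (intro mult_left_mono power_mono T T0) (use M0 in auto)
  also have "\<dots> \<le> (2 * MM D0 D1)^24 * (2^24 * (C * Qf c a + C * Qf c b))"
    by (intro mult_left_mono s1) (use M0 in auto)
  also have "\<dots> = ((2 * MM D0 D1)^24 * 2^24 * C) * (Qf c a + Qf c b)" by (simp add: algebra_simps)
  finally show ?thesis by (simp only: C_def)
qed


lemma det_bound:
  fixes \<Theta> :: "'d::finite par set"
  assumes "compact \<Theta>" "\<Theta> \<subseteq> admissible" "\<Theta> \<noteq> {}" "(h, u) \<noteq> (0, 0)"
  shows "\<exists>K D0 D1. 0 < D0 \<and> D0 \<le> D1 \<and> (\<forall>a b. 0 < a \<longrightarrow> 0 < b \<longrightarrow>
     (\<forall>\<theta>\<in>\<Theta>. \<forall>i. \<bar>pderiv_par i (\<lambda>\<phi>. ln (gdens \<phi> h u a b)) \<theta>\<bar> ^ 3 \<le> K * XX D0 D1 a b ^ 24) \<and>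
     (\<forall>\<theta>\<in>\<Theta>. \<forall>i j. \<bar>pderiv_par i (pderiv_par j (\<lambda>\<phi>. ln (gdens \<phi> h u a b))) \<theta>\<bar> \<le> K * XX D0 D1 a b ^ 24))"
proof -
  obtain D0 D1 Kd where U: "0 < D0" "D0 \<le> D1"
     "\<And>\<theta>. \<theta>\<in>\<Theta> \<Longrightarrow> D0 \<le> delta \<theta> h u \<and> delta \<theta> h u \<le> D1 \<and>
      (\<forall>i. \<bar>dd h u i \<theta>\<bar> \<le> Kd) \<and> (\<forall>i j. \<bar>dd2 h u i j \<theta>\<bar> \<le> Kd)"
    using unif[OF assms] by blast
  obtain \<theta>0 where \<theta>0: "\<theta>0 \<in> \<Theta>" using assms(3) by auto
  have Kd0: "0 \<le> Kd" using U(3)[OF \<theta>0] by (meson abs_ge_zero order_trans)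
  define c1 where "c1 = 5 / sqrt (2*D0)"
  define c2 where "c2 = (30 + 5 / sqrt (2*D0)) / (2*D0)"
  have c0: "0 \<le> c1" "0 \<le> c2" using U by (auto simp: c1_def c2_def)
  define K where "K = (c1 * Kd)^3 + c2 * Kd^2 + c1 * Kd"
  have "(\<forall>a b. 0 < a \<longrightarrow> 0 < b \<longrightarrow>
     (\<forall>\<theta>\<in>\<Theta>. \<forall>i. \<bar>pderiv_par i (\<lambda>\<phi>. ln (gdens \<phi> h u a b)) \<theta>\<bar> ^ 3 \<le> K * XX D0 D1 a b ^ 24) \<and>
     (\<forall>\<theta>\<in>\<Theta>. \<forall>i j. \<bar>pderiv_par i (pderiv_par j (\<lambda>\<phi>. ln (gdens \<phi> h u a b))) \<theta>\<bar> \<le> K * XX D0 D1 a b ^ 24))"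
  proof (intro allI impI conjI ballI)
    fix a b :: real and \<theta> i j assume ab: "0 < a" "0 < b" and th: "\<theta> \<in> \<Theta>"
    define X where "X = XX D0 D1 a b"
    have X1: "1 \<le> X" unfolding X_def by (rule XX_ge1) (use U ab in auto)
    have D: "D0 \<le> delta \<theta> h u" "delta \<theta> h u \<le> D1" using U(3)[OF th] by auto
    have Dp: "0 < delta \<theta> h u" using D U by simp
    note lb = LGD_bound[OF U(1) D ab, folded c1_def c2_def X_def]
    have ddb: "\<bar>dd h u i \<theta>\<bar> \<le> Kd" "\<bar>dd h u j \<theta>\<bar> \<le> Kd" "\<bar>dd2 h u i j \<theta>\<bar> \<le> Kd" using U(3)[OF th] by blast+
    have p1: "\<bar>pderiv_par i (\<lambda>\<phi>. ln (gdens \<phi> h u a b)) \<theta>\<bar> \<le> c1 * Kd * X^8"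
    proof -
      have "\<bar>pderiv_par i (\<lambda>\<phi>. ln (gdens \<phi> h u a b)) \<theta>\<bar>
         = \<bar>LGD1 (1/a) (1/b) b (ln (b/a)) (delta \<theta> h u)\<bar> * \<bar>dd h u i \<theta>\<bar>"
        by (simp add: pd1[OF Dp ab] abs_mult)
      also have "\<dots> \<le> (c1 * X^8) * Kd" by (intro mult_mono lb ddb) (use c0 X1 in auto)
      finally show ?thesis by (simp add: algebra_simps)
    qed
    have "\<bar>pderiv_par i (\<lambda>\<phi>. ln (gdens \<phi> h u a b)) \<theta>\<bar> ^ 3 \<le> (c1 * Kd * X^8) ^ 3"
      by (rule power_mono[OF p1]) simp
    also have "\<dots> = (c1 * Kd)^3 * X^24" by (simp add: power_mult_distrib power_mult[symmetric])
    also have "\<dots> \<le> K * X^24"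
      by (intro mult_right_mono) (use c0 Kd0 in \<open>auto simp: K_def\<close>)
    finally show "\<bar>pderiv_par i (\<lambda>\<phi>. ln (gdens \<phi> h u a b)) \<theta>\<bar> ^ 3 \<le> K * XX D0 D1 a b ^ 24"
      by (simp add: X_def)
    have "\<bar>pderiv_par i (pderiv_par j (\<lambda>\<phi>. ln (gdens \<phi> h u a b))) \<theta>\<bar>
       \<le> \<bar>LGD2 (1/a) (1/b) b (ln (b/a)) (delta \<theta> h u)\<bar> * \<bar>dd h u i \<theta>\<bar> * \<bar>dd h u j \<theta>\<bar>
         + \<bar>LGD1 (1/a) (1/b) b (ln (b/a)) (delta \<theta> h u)\<bar> * \<bar>dd2 h u i j \<theta>\<bar>"
      unfolding pd2[OF Dp ab] by (simp add: abs_mult[symmetric] abs_triangle_ineq)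
    also have "\<dots> \<le> (c2 * X^8) * Kd * Kd + (c1 * X^8) * Kd"
      by (intro add_mono mult_mono lb ddb) (use c0 X1 Kd0 in auto)
    also have "\<dots> = (c2 * Kd^2 + c1 * Kd) * X^8" by (simp add: algebra_simps power2_eq_square)
    also have "\<dots> \<le> K * X^24"
    proof (intro mult_mono)
      show "c2 * Kd^2 + c1 * Kd \<le> K" using c0 Kd0 by (simp add: K_def)
      show "X^8 \<le> X^24" by (rule pw[OF X1]) simp
    qed (use c0 Kd0 X1 in \<open>auto simp: K_def\<close>)
    finally show "\<bar>pderiv_par i (pderiv_par j (\<lambda>\<phi>. ln (gdens \<phi> h u a b))) \<theta>\<bar> \<le> K * XX D0 D1 a b ^ 24"
      by (simp add: X_def)
  qed
  then show ?thesis using U by blast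
qed


lemma VV_low:
  assumes "0 < D" "0 < y" "y \<le> n"
  shows "Phi 0 / y \<le> VV D y n"
proof -
  have "0 \<le> ln (n / y)" using assms by simp
  then have W0: "0 \<le> W D y n" unfolding W_def using assms by (intro add_nonneg_nonneg divide_nonneg_pos) auto
  have "Phi 0 / y \<le> 1 / y * Phi (W D y n)" using Phi_mono[OF W0] assms by (simp add: divide_right_mono)
  moreover have "0 \<le> 1 / n * Phi (W D n y)" using assms by (simp add: Phi_nonneg)
  ultimately show ?thesis unfolding VV_def by linarith
qed

lemma VV_up: "0 < y \<Longrightarrow> VV D y y \<le> 2 / y"
proof -
  assume y: "0 < y"
  have "1 / y * Phi (W D y y) \<le> 1 / y" using Phi_le1 y by (simp add: divide_right_mono)
  then show ?thesis unfolding VV_def by simp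
qed

locale jointcdf =
  fixes M X Y D
  assumes ps: "prob_space M" and Xm: "X \<in> borel_measurable M" and Ym: "Y \<in> borel_measurable M"
    and D: "0 < D"
    and J: "\<And>y1 y2. 0 < y1 \<Longrightarrow> 0 < y2 \<Longrightarrow> measure M {\<omega> \<in> space M. X \<omega> \<le> y1 \<and> Y \<omega> \<le> y2} = exp (- VV D y1 y2)"
begin

interpretation prob_space M by (rule ps)

lemma low: assumes y: "0 < y" shows "measure M {\<omega> \<in> space M. X \<omega> \<le> y} \<le> exp (- Phi 0 / y)"
proof -
  define A where "A n = {\<omega> \<in> space M. X \<omega> \<le> y \<and> Y \<omega> \<le> real n}" for n :: nat
  have As: "range A \<subseteq> sets M" unfolding A_def using Xm Ym by auto
  have inc: "incseq A" unfolding A_def incseq_def by auto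
  have U: "(\<Union>n. A n) = {\<omega> \<in> space M. X \<omega> \<le> y}"
  proof
    show "(\<Union>n. A n) \<subseteq> {\<omega> \<in> space M. X \<omega> \<le> y}" unfolding A_def by auto
    show "{\<omega> \<in> space M. X \<omega> \<le> y} \<subseteq> (\<Union>n. A n)"
    proof
      fix \<omega> assume "\<omega> \<in> {\<omega> \<in> space M. X \<omega> \<le> y}"
      moreover obtain n :: nat where "Y \<omega> \<le> real n" using real_arch_simple by blast
      ultimately show "\<omega> \<in> (\<Union>n. A n)" unfolding A_def by auto
    qed
  qed
  have lim: "(\<lambda>n. measure M (A n)) \<longlonglongrightarrow> measure M {\<omega> \<in> space M. X \<omega> \<le> y}"
    using finite_Lim_measure_incseq[OF As inc] unfolding U .
  obtain N :: nat where N: "y \<le> real N" using real_arch_simple by blast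
  show ?thesis
  proof (rule LIMSEQ_le_const2[OF lim], intro exI allI impI)
    fix n assume "Suc N \<le> n"
    then have n: "y \<le> real n" "0 < real n" using N by auto
    have "measure M (A n) = exp (- VV D y n)" unfolding A_def by (rule J) (use y n in auto)
    also have "\<dots> \<le> exp (- Phi 0 / y)" using VV_low[OF D y n(1)] by simp
    finally show "measure M (A n) \<le> exp (- Phi 0 / y)" .
  qed
qed

lemma up: assumes y: "0 < y" shows "measure M {\<omega> \<in> space M. y < X \<omega>} \<le> 2 / y"
proof -
  have s1: "{\<omega> \<in> space M. X \<omega> \<le> y} \<in> sets M" using Xm by measurable
  have "exp (- (2 / y)) \<le> exp (- VV D y y)" using VV_up[OF y, of D] by simp
  also have "\<dots> = measure M {\<omega> \<in> space M. X \<omega> \<le> y \<and> Y \<omega> \<le> y}" by (rule J[symmetric]) (use y in auto)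
  also have "\<dots> \<le> measure M {\<omega> \<in> space M. X \<omega> \<le> y}" by (rule finite_measure_mono) (use s1 in auto)
  finally have a: "1 - 2 / y \<le> measure M {\<omega> \<in> space M. X \<omega> \<le> y}"
    using exp_ge_add_one_self[of "- (2/y)"] by linarith
  have "{\<omega> \<in> space M. y < X \<omega>} = space M - {\<omega> \<in> space M. X \<omega> \<le> y}" by auto
  then have "measure M {\<omega> \<in> space M. y < X \<omega>} = 1 - measure M {\<omega> \<in> space M. X \<omega> \<le> y}"
    using prob_compl[OF s1] by simp
  then show ?thesis using a by simp
qed

lemma pos_AE: "AE \<omega> in M. 0 < X \<omega>"
proof -
  have c: "0 < Phi 0" by (rule Phi_pos)
  define S where "S = {\<omega> \<in> space M. X \<omega> \<le> 0}"
  have Ss: "S \<in> sets M" unfolding S_def using Xm by measurable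
  have b: "measure M S \<le> y / Phi 0" if y: "0 < y" for y
  proof -
    have "measure M S \<le> measure M {\<omega> \<in> space M. X \<omega> \<le> y}"
      by (rule finite_measure_mono) (use Xm y in \<open>auto simp: S_def\<close>)
    also have "\<dots> \<le> exp (- Phi 0 / y)" by (rule low[OF y])
    also have "\<dots> \<le> y / Phi 0"
    proof -
      have "Phi 0 / y \<le> exp (Phi 0 / y)" using exp_ge_add_one_self[of "Phi 0 / y"] by linarith
      then have "1 / exp (Phi 0 / y) \<le> 1 / (Phi 0 / y)" using c y by (intro divide_left_mono) auto
      then show ?thesis using c y by (simp add: exp_minus field_simps)
    qed
    finally show ?thesis .
  qed
  have "measure M S = 0"
  proof (rule ccontr)
    assume "measure M S \<noteq> 0"
    then have m: "0 < measure M S" using measure_nonneg[of M S] by linarith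
    have "measure M S \<le> (measure M S * Phi 0 / 2) / Phi 0" using b[of "measure M S * Phi 0 / 2"] m c by simp
    then show False using m c by (simp add: field_simps)
  qed
  then have "S \<in> null_sets M" using Ss by (simp add: null_sets_def emeasure_eq_measure)
  then have "AE \<omega> in M. \<omega> \<notin> S" using AE_iff_null_sets[OF Ss] by simp
  with AE_space show ?thesis by eventually_elim (auto simp: S_def)
qed

lemma mom_exp: "(\<integral>\<^sup>+\<omega>. ennreal (if 0 < X \<omega> then exp (Phi 0 / 2 / X \<omega>) else 0) \<partial>M) < \<infinity>"
proof (rule dyadic[OF ps, where C=1])
  show "(\<lambda>\<omega>. if 0 < X \<omega> then exp (Phi 0 / 2 / X \<omega>) else 0) \<in> borel_measurable M"
    using Xm by measurable
  show "0 \<le> (if 0 < X \<omega> then exp (Phi 0 / 2 / X \<omega>) else 0)" for \<omega> by simp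
  fix k :: nat
  define c where "c = Phi 0 / 2"
  have c: "0 < c" using Phi_pos[of 0] by (simp add: c_def)
  show "measure M {\<omega> \<in> space M. 2^k \<le> (if 0 < X \<omega> then exp (Phi 0 / 2 / X \<omega>) else 0)} \<le> 1 * (1/4)^k"
  proof (cases "k = 0")
    case True then show ?thesis by simp
  next
    case False
    define y where "y = c / (real k * ln 2)"
    have kl: "0 < real k * ln 2" using False by simp
    have y: "0 < y" using c kl by (simp add: y_def)
    have sub: "{\<omega> \<in> space M. 2^k \<le> (if 0 < X \<omega> then exp (Phi 0 / 2 / X \<omega>) else 0)}
        \<subseteq> {\<omega> \<in> space M. X \<omega> \<le> y}"
    proof safe
      fix \<omega> assume "\<omega> \<in> space M" and h: "2^k \<le> (if 0 < X \<omega> then exp (Phi 0 / 2 / X \<omega>) else 0)"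
      have pos: "(0::real) < 2^k" by simp
      have X0: "0 < X \<omega>"
      proof (rule ccontr)
        assume "\<not> 0 < X \<omega>"
        with h have "(2::real)^k \<le> 0" by simp
        with pos show False by linarith
      qed
      then have "2^k \<le> exp (c / X \<omega>)" using h by (simp add: c_def)
      then have "ln (2^k) \<le> c / X \<omega>" using ln_exp[of "c / X \<omega>"] by (metis ln_le_cancel_iff exp_gt_zero zero_less_power zero_less_numeral)
      then have "real k * ln 2 \<le> c / X \<omega>" by (simp add: ln_realpow)
      then show "X \<omega> \<le> y" unfolding y_def using X0 kl by (simp add: field_simps)
    qed
    have "measure M {\<omega> \<in> space M. 2^k \<le> (if 0 < X \<omega> then exp (Phi 0 / 2 / X \<omega>) else 0)}
        \<le> measure M {\<omega> \<in> space M. X \<omega> \<le> y}"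
      by (rule finite_measure_mono[OF sub]) (use Xm in measurable)
    also have "\<dots> \<le> exp (- Phi 0 / y)" by (rule low[OF y])
    also have "- Phi 0 / y = real k * (- ln 4)"
    proof -
      have "ln (4::real) = 2 * ln 2" using ln_realpow[of 2 2] by simp
      then show ?thesis unfolding y_def c_def using kl Phi_pos[of 0] by (simp add: field_simps)
    qed
    also have "exp (real k * (- ln 4)) = (1/4::real)^k" by (simp add: exp_of_nat_mult exp_minus inverse_eq_divide power_one_over)
    finally show ?thesis by simp
  qed
qed

lemma mom_sqrt: "(\<integral>\<^sup>+\<omega>. ennreal (if 0 < X \<omega> then sqrt (X \<omega>) else 0) \<partial>M) < \<infinity>"
proof (rule dyadic[OF ps, where C=4])
  show "(\<lambda>\<omega>. if 0 < X \<omega> then sqrt (X \<omega>) else 0) \<in> borel_measurable M"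
    using Xm by measurable
  show "0 \<le> (if 0 < X \<omega> then sqrt (X \<omega>) else 0)" for \<omega> by simp
  fix k :: nat
  define y where "y = (4::real)^k / 2"
  have y: "0 < y" by (simp add: y_def)
  have sub: "{\<omega> \<in> space M. 2^k \<le> (if 0 < X \<omega> then sqrt (X \<omega>) else 0)} \<subseteq> {\<omega> \<in> space M. y < X \<omega>}"
  proof safe
    fix \<omega> assume "\<omega> \<in> space M" and h: "2^k \<le> (if 0 < X \<omega> then sqrt (X \<omega>) else 0)"
    have pos: "(0::real) < 2^k" by simp
    have X0: "0 < X \<omega>"
    proof (rule ccontr)
      assume "\<not> 0 < X \<omega>"
      with h have "(2::real)^k \<le> 0" by simp
      with pos show False by linarith
    qed
    then have "2^k \<le> sqrt (X \<omega>)" using h by simp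
    then have "(2^k)^2 \<le> (sqrt (X \<omega>))^2" by (intro power_mono) (use pos in auto)
    then have "(2^k)^2 \<le> X \<omega>" using X0 by simp
    moreover have "((2::real)^k)^2 = 4^k"
    proof -
      have "((2::real)^k)^2 = (2^2)^k" by (simp only: power_mult[symmetric] mult.commute)
      then show ?thesis by simp
    qed
    ultimately have "4^k \<le> X \<omega>" by simp
    then show "y < X \<omega>" unfolding y_def using X0 by linarith
  qed
  have "measure M {\<omega> \<in> space M. 2^k \<le> (if 0 < X \<omega> then sqrt (X \<omega>) else 0)}
      \<le> measure M {\<omega> \<in> space M. y < X \<omega>}"
    by (rule finite_measure_mono[OF sub]) (use Xm in measurable)
  also have "\<dots> \<le> 2 / y" by (rule up[OF y])
  also have "2 / y = 4 * (1/4)^k" by (simp add: y_def power_divide)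
  finally show "measure M {\<omega> \<in> space M. 2^k \<le> (if 0 < X \<omega> then sqrt (X \<omega>) else 0)} \<le> 4 * (1/4)^k" .
qed

end


lemma delta_neg: "delta \<theta> (- h) (- u) = delta \<theta> h u"
  by (simp add: delta_def)

lemma ennreal_bound:
  fixes K e1 s1 e2 s2 v :: real
  assumes "0 \<le> K" "0 \<le> e1" "0 \<le> s1" "0 \<le> e2" "0 \<le> s2" "v \<le> K * (e1 + s1 + e2 + s2)"
  shows "ennreal v \<le> ennreal K * (ennreal e1 + ennreal s1 + ennreal e2 + ennreal s2)"
proof -
  have "ennreal v \<le> ennreal (K * (e1 + s1 + e2 + s2))" by (rule ennreal_leI) (rule assms(6))
  also have "\<dots> = ennreal K * ennreal (e1 + s1 + e2 + s2)" using assms by (simp add: ennreal_mult)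
  also have "ennreal (e1 + s1 + e2 + s2) = ennreal e1 + ennreal s1 + ennreal e2 + ennreal s2"
    using assms by (simp add: ennreal_plus)
  finally show ?thesis .
qed

lemma Qf_split: "0 < y \<Longrightarrow> Qf c y = (if 0 < y then exp (c / y) else 0) + (if 0 < y then sqrt y else 0)"
  by (simp add: Qf_def)

theorem lemma2:
  fixes M :: "'a measure"
    and eta :: "(real ^ 'd::finite) \<times> real \<Rightarrow> 'a \<Rightarrow> real"
    and \<Theta>star :: "'d par set"
    and \<theta>star :: "'d par"
    and r :: "nat ^ 'd" and p :: nat
    and s1 s2 :: "real ^ 'd" and t1 t2 :: real
  assumes "prob_space M"
    and meas: "\<And>s t. 0 \<le> t \<Longrightarrow> eta (s, t) \<in> borel_measurable M"
    and law: "\<And>s t s' t' y1 y2. 0 \<le> t \<Longrightarrow> 0 \<le> t' \<Longrightarrow> (s, t) \<noteq> (s', t') \<Longrightarrow>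
        0 < y1 \<Longrightarrow> 0 < y2 \<Longrightarrow>
        measure M {\<omega> \<in> space M. eta (s, t) \<omega> \<le> y1 \<and> eta (s', t') \<omega> \<le> y2}
          = Gcdf \<theta>star (s' - s) (t' - t) y1 y2"
    and "compact \<Theta>star" and "\<Theta>star \<subseteq> admissible" and "\<theta>star \<in> \<Theta>star"
    and "(r, p) \<noteq> (0, 0)"
    and "identifiable \<Theta>star r p"
    and "0 \<le> t1" and "0 \<le> t2" and "(s1, t1) \<noteq> (s2, t2)"
  shows "(\<forall>\<theta>\<in>\<Theta>star. \<forall>i.
           (\<integral>\<^sup>+ \<omega>. ennreal (\<bar>pderiv_par i
               (\<lambda>\<phi>. ln (gdens \<phi> (s2 - s1) (t2 - t1) (eta (s1, t1) \<omega>) (eta (s2, t2) \<omega>))) \<theta>\<bar> ^ 3) \<partial>M)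
           < \<infinity>) \<and>
         (\<forall>i j.
           (\<integral>\<^sup>+ \<omega>. (SUP \<theta>\<in>\<Theta>star. ennreal \<bar>pderiv_par i (pderiv_par j
               (\<lambda>\<phi>. ln (gdens \<phi> (s2 - s1) (t2 - t1) (eta (s1, t1) \<omega>) (eta (s2, t2) \<omega>)))) \<theta>\<bar>) \<partial>M)
           < \<infinity>)"
proof -
  interpret P: prob_space M by fact
  note asm = assms
  define h where "h = s2 - s1"
  define u where "u = t2 - t1"
  have hu: "(h, u) \<noteq> (0, 0)" using asm(11) by (auto simp: h_def u_def)
  have ne: "\<Theta>star \<noteq> {}" using asm(6) by auto
  obtain K D0 D1 where KD: "0 < D0" "D0 \<le> D1"
    and B: "\<And>a b. 0 < a \<Longrightarrow> 0 < b \<Longrightarrow>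
     (\<forall>\<theta>\<in>\<Theta>star. \<forall>i. \<bar>pderiv_par i (\<lambda>\<phi>. ln (gdens \<phi> h u a b)) \<theta>\<bar> ^ 3 \<le> K * XX D0 D1 a b ^ 24) \<and>
     (\<forall>\<theta>\<in>\<Theta>star. \<forall>i j. \<bar>pderiv_par i (pderiv_par j (\<lambda>\<phi>. ln (gdens \<phi> h u a b))) \<theta>\<bar> \<le> K * XX D0 D1 a b ^ 24)"
    using det_bound[OF asm(4) asm(5) ne hu] by blast
  obtain Dl Du Kd where U: "0 < Dl" "\<And>\<theta>. \<theta>\<in>\<Theta>star \<Longrightarrow> Dl \<le> delta \<theta> h u"
    using unif[OF asm(4) asm(5) ne hu] by blast
  define Dst where "Dst = delta \<theta>star h u"
  have Dst: "0 < Dst" using U(1) U(2)[OF asm(6)] by (simp add: Dst_def)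
  define X1 where "X1 = eta (s1, t1)"
  define X2 where "X2 = eta (s2, t2)"
  have X1m: "X1 \<in> borel_measurable M" unfolding X1_def by (rule meas) (rule asm(9))
  have X2m: "X2 \<in> borel_measurable M" unfolding X2_def by (rule meas) (rule asm(10))
  interpret J1: jointcdf M X1 X2 Dst
  proof (rule jointcdf.intro)
    show "prob_space M" by fact
    show "X1 \<in> borel_measurable M" "X2 \<in> borel_measurable M" "0 < Dst" by (fact X1m, fact X2m, fact Dst)
    fix y1 y2 :: real assume y: "0 < y1" "0 < y2"
    show "measure M {\<omega> \<in> space M. X1 \<omega> \<le> y1 \<and> X2 \<omega> \<le> y2} = exp (- VV Dst y1 y2)"
      unfolding X1_def X2_def using law[OF asm(9) asm(10) asm(11) y]
      by (simp add: Gcdf_VV Dst_def h_def u_def)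
  qed
  interpret J2: jointcdf M X2 X1 Dst
  proof (rule jointcdf.intro)
    show "prob_space M" by fact
    show "X2 \<in> borel_measurable M" "X1 \<in> borel_measurable M" "0 < Dst" by (fact X2m, fact X1m, fact Dst)
    fix y1 y2 :: real assume y: "0 < y1" "0 < y2"
    have neq: "(s2, t2) \<noteq> (s1, t1)" using asm(11) by auto
    have dn: "delta \<theta>star (s1 - s2) (t1 - t2) = Dst"
      using delta_neg[of \<theta>star h u] by (simp add: Dst_def h_def u_def)
    show "measure M {\<omega> \<in> space M. X2 \<omega> \<le> y1 \<and> X1 \<omega> \<le> y2} = exp (- VV Dst y1 y2)"
      unfolding X1_def X2_def using law[OF asm(10) asm(9) neq y]
      by (simp add: Gcdf_VV dn)
  qed
  define c where "c = Phi 0 / 2"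
  have c: "0 < c" using Phi_pos[of 0] by (simp add: c_def)
  define Cq where "Cq = ((2 * MM D0 D1)^24 * 2^24 * ((2 + 2 * 24)^24 + 3^24 * (24 / c)^24))"
  have Cq: "0 \<le> Cq" using c unfolding Cq_def
    by (intro mult_nonneg_nonneg add_nonneg_nonneg) (auto simp: MM_def)
  define KC where "KC = max K 0 * Cq"
  have KC: "0 \<le> KC" using Cq by (simp add: KC_def)
  define E1 where "E1 \<omega> = (if 0 < X1 \<omega> then exp (Phi 0 / 2 / X1 \<omega>) else 0)" for \<omega>
  define S1 where "S1 \<omega> = (if 0 < X1 \<omega> then sqrt (X1 \<omega>) else 0)" for \<omega>
  define E2 where "E2 \<omega> = (if 0 < X2 \<omega> then exp (Phi 0 / 2 / X2 \<omega>) else 0)" for \<omega>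
  define S2 where "S2 \<omega> = (if 0 < X2 \<omega> then sqrt (X2 \<omega>) else 0)" for \<omega>
  have nn: "0 \<le> E1 \<omega>" "0 \<le> S1 \<omega>" "0 \<le> E2 \<omega>" "0 \<le> S2 \<omega>" for \<omega>
    by (auto simp: E1_def S1_def E2_def S2_def)
  define Bd where "Bd \<omega> = ennreal KC * (ennreal (E1 \<omega>) + ennreal (S1 \<omega>) + ennreal (E2 \<omega>) + ennreal (S2 \<omega>))" for \<omega>
  have Bfin: "(\<integral>\<^sup>+\<omega>. Bd \<omega> \<partial>M) < \<infinity>"
  proof -
    have m: "(\<lambda>\<omega>. ennreal (E1 \<omega>)) \<in> borel_measurable M" "(\<lambda>\<omega>. ennreal (S1 \<omega>)) \<in> borel_measurable M"
      "(\<lambda>\<omega>. ennreal (E2 \<omega>)) \<in> borel_measurable M" "(\<lambda>\<omega>. ennreal (S2 \<omega>)) \<in> borel_measurable M"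
      unfolding E1_def S1_def E2_def S2_def using X1m X2m by measurable
    have "(\<integral>\<^sup>+\<omega>. Bd \<omega> \<partial>M) = ennreal KC * ((\<integral>\<^sup>+\<omega>. ennreal (E1 \<omega>) \<partial>M) + (\<integral>\<^sup>+\<omega>. ennreal (S1 \<omega>) \<partial>M)
        + (\<integral>\<^sup>+\<omega>. ennreal (E2 \<omega>) \<partial>M) + (\<integral>\<^sup>+\<omega>. ennreal (S2 \<omega>) \<partial>M))"
      unfolding Bd_def using m
      by (simp add: nn_integral_cmult nn_integral_add)
    also have "\<dots> < \<infinity>"
      using J1.mom_exp J1.mom_sqrt J2.mom_exp J2.mom_sqrt
      unfolding E1_def S1_def E2_def S2_def
      by (simp add: ennreal_mult_less_top less_top[symmetric] ennreal_mult_eq_top_iff ennreal_add_eq_top)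
    finally show ?thesis .
  qed
  have AEp: "AE \<omega> in M. 0 < X1 \<omega> \<and> 0 < X2 \<omega>" using J1.pos_AE J2.pos_AE by eventually_elim auto
  have rb: "v \<le> K * XX D0 D1 (X1 \<omega>) (X2 \<omega>) ^ 24 \<Longrightarrow> ennreal v \<le> Bd \<omega>"
    if pos: "0 < X1 \<omega>" "0 < X2 \<omega>" for v \<omega>
  proof -
    assume v: "v \<le> K * XX D0 D1 (X1 \<omega>) (X2 \<omega>) ^ 24"
    have "K * XX D0 D1 (X1 \<omega>) (X2 \<omega>) ^ 24 \<le> max K 0 * XX D0 D1 (X1 \<omega>) (X2 \<omega>) ^ 24"
      by (intro mult_right_mono) auto
    also have "\<dots> \<le> max K 0 * (Cq * (Qf c (X1 \<omega>) + Qf c (X2 \<omega>)))"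
      by (intro mult_left_mono) (use XX_Q[OF KD pos c] in \<open>auto simp: Cq_def\<close>)
    also have "\<dots> = KC * (E1 \<omega> + S1 \<omega> + E2 \<omega> + S2 \<omega>)"
      using pos by (simp add: KC_def E1_def S1_def E2_def S2_def Qf_def c_def algebra_simps)
    finally show ?thesis unfolding Bd_def using v by (intro ennreal_bound KC nn) simp
  qed
  show ?thesis
  proof (intro conjI ballI allI)
    fix \<theta> i assume th: "\<theta> \<in> \<Theta>star"
    have "(\<integral>\<^sup>+ \<omega>. ennreal (\<bar>pderiv_par i
               (\<lambda>\<phi>. ln (gdens \<phi> (s2 - s1) (t2 - t1) (eta (s1, t1) \<omega>) (eta (s2, t2) \<omega>))) \<theta>\<bar> ^ 3) \<partial>M)
       \<le> (\<integral>\<^sup>+\<omega>. Bd \<omega> \<partial>M)"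
    proof (rule nn_integral_mono_AE)
      show "AE \<omega> in M. ennreal (\<bar>pderiv_par i
               (\<lambda>\<phi>. ln (gdens \<phi> (s2 - s1) (t2 - t1) (eta (s1, t1) \<omega>) (eta (s2, t2) \<omega>))) \<theta>\<bar> ^ 3) \<le> Bd \<omega>"
        using AEp
      proof eventually_elim
        case (elim \<omega>)
        have pos: "0 < X1 \<omega>" "0 < X2 \<omega>" using elim by auto
        note b = B[OF pos]
        show ?case
          by (rule rb[OF pos]) (use b th in \<open>unfold X1_def X2_def h_def u_def, blast\<close>)
      qed
    qed
    also have "\<dots> < \<infinity>" by (rule Bfin)
    finally show "(\<integral>\<^sup>+ \<omega>. ennreal (\<bar>pderiv_par i
               (\<lambda>\<phi>. ln (gdens \<phi> (s2 - s1) (t2 - t1) (eta (s1, t1) \<omega>) (eta (s2, t2) \<omega>))) \<theta>\<bar> ^ 3) \<partial>M) < \<infinity>" .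
  next
    fix i j
    have "(\<integral>\<^sup>+ \<omega>. (SUP \<theta>\<in>\<Theta>star. ennreal \<bar>pderiv_par i (pderiv_par j
               (\<lambda>\<phi>. ln (gdens \<phi> (s2 - s1) (t2 - t1) (eta (s1, t1) \<omega>) (eta (s2, t2) \<omega>)))) \<theta>\<bar>) \<partial>M)
       \<le> (\<integral>\<^sup>+\<omega>. Bd \<omega> \<partial>M)"
    proof (rule nn_integral_mono_AE)
      show "AE \<omega> in M. (SUP \<theta>\<in>\<Theta>star. ennreal \<bar>pderiv_par i (pderiv_par j
               (\<lambda>\<phi>. ln (gdens \<phi> (s2 - s1) (t2 - t1) (eta (s1, t1) \<omega>) (eta (s2, t2) \<omega>)))) \<theta>\<bar>) \<le> Bd \<omega>"
        using AEp
      proof eventually_elim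
        case (elim \<omega>)
        show ?case
        proof (rule SUP_least)
          fix \<theta> assume th: "\<theta> \<in> \<Theta>star"
          show "ennreal \<bar>pderiv_par i (pderiv_par j
               (\<lambda>\<phi>. ln (gdens \<phi> (s2 - s1) (t2 - t1) (eta (s1, t1) \<omega>) (eta (s2, t2) \<omega>)))) \<theta>\<bar> \<le> Bd \<omega>"
          proof -
            have pos: "0 < X1 \<omega>" "0 < X2 \<omega>" using elim by auto
            note b = B[OF pos]
            show ?thesis
              by (rule rb[OF pos]) (use b th in \<open>unfold X1_def X2_def h_def u_def, blast\<close>)
          qed
        qed
      qed
    qed
    also have "\<dots> < \<infinity>" by (rule Bfin)
    finally show "(\<integral>\<^sup>+ \<omega>. (SUP \<theta>\<in>\<Theta>star. ennreal \<bar>pderiv_par i (pderiv_par j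
               (\<lambda>\<phi>. ln (gdens \<phi> (s2 - s1) (t2 - t1) (eta (s1, t1) \<omega>) (eta (s2, t2) \<omega>)))) \<theta>\<bar>) \<partial>M) < \<infinity>" .
  qed
qed

end
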